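(* Let $1<p\le2$ and assume $\sup_{\xi\in\mathcal{I}}\|v_\xi\|_{L^\infty(\overline{M})}/\|u_\xi\|_{L^\infty(\overline{M})}<\infty$. Let $\varphi$ be a positive function on $\mathcal{I}$ such that $$M_\varphi:=\sup_{t>0}\,t\sum_{\xi\in\mathcal{I}:\ t\le\varphi(\xi)}\|u_\xi\|^2_{L^\infty(\overline{M})}<\infty.$$ Then for every $f\in L^p(\overline{M})$, $$\Big(\sum_{\xi\in\mathcal{I}}|\mathcal{F}_Lf(\xi)|^p\,\|u_\xi\|_{L^\infty(\overline{M})}^{2-p}\,\varphi(\xi)^{2-p}\Big)^{1/p}\lesssim M_\varphi^{\frac{2-p}{p}}\|f\|_{L^p(\overline{M})}.$$
   Context: Standing setup: $\overline{M}$ is a smooth orientable manifold with (possibly empty) boundary and a smooth density $dx$. $L$ is a pseudo-differential operator on its interior with boundary conditions giving discrete spectrum $\{\lambda_\xi\}_{\xi\in\mathcal{I}}$ ($\mathcal{I}$ countable), eigenfunctions $u_\xi$ of $L$ and $v_\xi$ of $L^*$ ($L^*v_\xi=\overline{\lambda_\xi}v_\xi$), with $\|u_\xi\|_{L^2}=\|v_\xi\|_{L^2}=1$, $(u_\xi,v_\eta)_{L^2}=\delta_{\xi\eta}$, $\{u_\xi\}$ a Riesz basis of $L^2(\overline{M})$, and $u_\xi,v_\xi\in L^\infty(\overline{M})$. $\mathcal{F}_Lf(\xi):=\int_{\overline{M}}f(x)\overline{v_\xi(x)}\,dx$. *)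

theory Defs
  imports "HOL-Analysis.Analysis" "HOL-Probability.Essential_Supremum"
begin

text \<open>Abstract setting: the manifold with smooth density is replaced by a general
measure space M; functions are complex-valued.\<close>

definition in_Lp :: "'a measure \<Rightarrow> real \<Rightarrow> ('a \<Rightarrow> complex) \<Rightarrow> bool" where
  "in_Lp M p f \<longleftrightarrow> f \<in> borel_measurable M \<and> integrable M (\<lambda>x. norm (f x) powr p)"

definition Lp_norm :: "'a measure \<Rightarrow> real \<Rightarrow> ('a \<Rightarrow> complex) \<Rightarrow> real" where
  "Lp_norm M p f = (\<integral>x. norm (f x) powr p \<partial>M) powr (1 / p)"

definition in_Linf :: "'a measure \<Rightarrow> ('a \<Rightarrow> complex) \<Rightarrow> bool" where
  "in_Linf M f \<longleftrightarrow> f \<in> borel_measurable M \<and> esssup M (\<lambda>x. ennreal (norm (f x))) < \<infinity>"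

definition Linf_norm :: "'a measure \<Rightarrow> ('a \<Rightarrow> complex) \<Rightarrow> real" where
  "Linf_norm M f = enn2real (esssup M (\<lambda>x. ennreal (norm (f x))))"

definition L2_inner :: "'a measure \<Rightarrow> ('a \<Rightarrow> complex) \<Rightarrow> ('a \<Rightarrow> complex) \<Rightarrow> complex" where
  "L2_inner M f g = (\<integral>x. f x * cnj (g x) \<partial>M)"

definition riesz_basis :: "'a measure \<Rightarrow> 'i set \<Rightarrow> ('i \<Rightarrow> 'a \<Rightarrow> complex) \<Rightarrow> bool" where
  "riesz_basis M I u \<longleftrightarrow>
     (\<forall>\<xi>\<in>I. in_Lp M 2 (u \<xi>)) \<and>
     (\<forall>f. in_Lp M 2 f \<longrightarrow> (\<forall>\<epsilon>>0. \<exists>F c. finite F \<and> F \<subseteq> I \<and>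
          Lp_norm M 2 (\<lambda>x. f x - (\<Sum>\<xi>\<in>F. c \<xi> * u \<xi> x)) < \<epsilon>)) \<and>
     (\<exists>A B. 0 < A \<and> 0 < B \<and> (\<forall>F c. finite F \<longrightarrow> F \<subseteq> I \<longrightarrow>
          A * (\<Sum>\<xi>\<in>F. (cmod (c \<xi>))\<^sup>2) \<le> (Lp_norm M 2 (\<lambda>x. \<Sum>\<xi>\<in>F. c \<xi> * u \<xi> x))\<^sup>2 \<and>
          (Lp_norm M 2 (\<lambda>x. \<Sum>\<xi>\<in>F. c \<xi> * u \<xi> x))\<^sup>2 \<le> B * (\<Sum>\<xi>\<in>F. (cmod (c \<xi>))\<^sup>2)))"

definition FL :: "'a measure \<Rightarrow> ('i \<Rightarrow> 'a \<Rightarrow> complex) \<Rightarrow> ('a \<Rightarrow> complex) \<Rightarrow> 'i \<Rightarrow> complex" where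
  "FL M v f \<xi> = (\<integral>x. f x * cnj (v \<xi> x) \<partial>M)"

definition M_phi :: "'a measure \<Rightarrow> 'i set \<Rightarrow> ('i \<Rightarrow> 'a \<Rightarrow> complex) \<Rightarrow> ('i \<Rightarrow> real) \<Rightarrow> ennreal" where
  "M_phi M I u \<phi> = (SUP t\<in>{0<..}. ennreal t *
      infsum (\<lambda>\<xi>. ennreal ((Linf_norm M (u \<xi>))\<^sup>2)) {\<xi>\<in>I. t \<le> \<phi> \<xi>})"

end

theory Submission
  imports Defs
begin



lemma nn_count_le_finite_sums:
  fixes g :: "'x \<Rightarrow> ennreal"
  assumes "countable A" "\<And>F. finite F \<Longrightarrow> F \<subseteq> A \<Longrightarrow> sum g F \<le> B"
  shows "(\<integral>\<^sup>+x. g x \<partial>count_space A) \<le> B"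
proof (cases "finite A")
  case True thus ?thesis using assms by (simp add: nn_integral_count_space_finite)
next
  case False
  have bij: "bij_betw (from_nat_into A) UNIV A"
    using bij_betw_from_nat_into[OF assms(1) False] .
  have "(\<integral>\<^sup>+x. g x \<partial>count_space A) = (\<integral>\<^sup>+n. g (from_nat_into A n) \<partial>count_space UNIV)"
    using nn_integral_bij_count_space[OF bij, of g] by simp
  also have "\<dots> = (\<Sum>n. g (from_nat_into A n))" by (rule nn_integral_count_space_nat)
  also have "\<dots> = (SUP n. \<Sum>i<n. g (from_nat_into A i))" by (rule suminf_eq_SUP)
  also have "\<dots> \<le> B"
  proof (rule SUP_least)
    fix n
    have inj: "inj_on (from_nat_into A) {..<n}"
      using bij by (meson bij_betw_def inj_on_subset subset_UNIV)
    have "(\<Sum>i<n. g (from_nat_into A i)) = sum g (from_nat_into A ` {..<n})"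
      by (simp add: sum.reindex[OF inj])
    also have "\<dots> \<le> B" using assms(2) bij
      by (metis bij_betw_def finite_imageI finite_lessThan image_mono top_greatest)
    finally show "(\<Sum>i<n. g (from_nat_into A i)) \<le> B" .
  qed
  finally show ?thesis .
qed

lemma nn_count_ge_point:
  fixes g :: "'x \<Rightarrow> ennreal"
  assumes "x0 \<in> A"
  shows "g x0 \<le> (\<integral>\<^sup>+x. g x \<partial>count_space A)"
proof -
  have "(\<integral>\<^sup>+x. g x * indicator {x0} x \<partial>count_space A) = (\<Sum>x\<in>{x0}. g x * indicator {x0} x)"
    by (rule nn_integral_count_space') (use assms in auto)
  hence "(\<integral>\<^sup>+x. g x * indicator {x0} x \<partial>count_space A) = g x0" by simp
  moreover have "(\<integral>\<^sup>+x. g x * indicator {x0} x \<partial>count_space A) \<le> (\<integral>\<^sup>+x. g x \<partial>count_space A)"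
    by (intro nn_integral_mono) (auto split: split_indicator)
  ultimately show ?thesis by simp
qed

lemma infsum_ennreal_ge_finite:
  fixes g :: "'x \<Rightarrow> ennreal"
  assumes "finite F" "F \<subseteq> A"
  shows "sum g F \<le> infsum g A"
  using assms by (subst nonneg_infsum_complete) (auto intro!: SUP_upper)


lemma two_powr_neg_lt1: "0 < (q::real) \<Longrightarrow> 2 powr (-q) < 1"
  using powr_less_cancel_iff[of 2 "-q" 0] by simp

lemma nn_geom_nat:
  fixes c r :: real
  assumes "0 \<le> c" "0 \<le> r" "r < 1"
  shows "(\<integral>\<^sup>+n. ennreal (c * r ^ n) \<partial>count_space UNIV) = ennreal (c / (1 - r))"
proof -
  have "(\<integral>\<^sup>+n. ennreal (c * r ^ n) \<partial>count_space UNIV) = (\<Sum>n. ennreal (c * r ^ n))"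
    by (rule nn_integral_count_space_nat)
  also have "\<dots> = ennreal (\<Sum>n. c * r ^ n)"
    by (rule suminf_ennreal2) (use assms in \<open>auto intro!: summable_mult summable_geometric\<close>)
  also have "(\<Sum>n. c * r ^ n) = c / (1 - r)"
    using assms suminf_geometric[of r] suminf_mult[of "\<lambda>n. r ^ n" c]
    by (auto intro!: summable_geometric)
  finally show ?thesis .
qed

lemma geom_up:
  fixes k1 :: int and q :: real
  assumes "0 < q"
  shows "(\<integral>\<^sup>+k. ennreal (2 powr (real_of_int k * q)) * indicator {..k1} k \<partial>count_space UNIV)
         = ennreal (2 powr (real_of_int k1 * q) / (1 - 2 powr (-q)))"
proof -
  have bij: "bij_betw (\<lambda>n::nat. k1 - int n) UNIV {..k1}"
    by (rule bij_betwI[where g="\<lambda>k. nat (k1 - k)"]) auto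
  have "(\<integral>\<^sup>+k. ennreal (2 powr (real_of_int k * q)) * indicator {..k1} k \<partial>count_space UNIV)
      = (\<integral>\<^sup>+k. ennreal (2 powr (real_of_int k * q)) \<partial>count_space {..k1})"
    by (simp add: nn_integral_count_space_indicator)
  also have "\<dots> = (\<integral>\<^sup>+n. ennreal (2 powr (real_of_int (k1 - int n) * q)) \<partial>count_space UNIV)"
    using nn_integral_bij_count_space[OF bij, of "\<lambda>k. ennreal (2 powr (real_of_int k * q))"] by simp
  also have "\<dots> = (\<integral>\<^sup>+n. ennreal (2 powr (real_of_int k1 * q) * (2 powr (-q)) ^ n) \<partial>count_space UNIV)"
  proof (intro nn_integral_cong arg_cong[where f=ennreal])
    fix n :: nat
    have "2 powr (real_of_int (k1 - int n) * q) = 2 powr (real_of_int k1 * q + real n * (-q))"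
      by (simp add: algebra_simps)
    also have "\<dots> = 2 powr (real_of_int k1 * q) * (2 powr (-q)) ^ n"
      by (simp only: powr_add, simp add: powr_realpow[symmetric] powr_powr mult.commute)
    finally show "2 powr (real_of_int (k1 - int n) * q) = 2 powr (real_of_int k1 * q) * (2 powr (-q)) ^ n" .
  qed
  also have "\<dots> = ennreal (2 powr (real_of_int k1 * q) / (1 - 2 powr (-q)))"
    by (rule nn_geom_nat) (use assms two_powr_neg_lt1 in auto)
  finally show ?thesis .
qed

lemma geom_down:
  fixes k2 :: int and q :: real
  assumes "0 < q"
  shows "(\<integral>\<^sup>+k. ennreal (2 powr (- (real_of_int k * q))) * indicator {k2..} k \<partial>count_space UNIV)
         = ennreal (2 powr (- (real_of_int k2 * q)) / (1 - 2 powr (-q)))"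
proof -
  have bij: "bij_betw (\<lambda>n::nat. k2 + int n) UNIV {k2..}"
    by (rule bij_betwI[where g="\<lambda>k. nat (k - k2)"]) auto
  have "(\<integral>\<^sup>+k. ennreal (2 powr (- (real_of_int k * q))) * indicator {k2..} k \<partial>count_space UNIV)
      = (\<integral>\<^sup>+k. ennreal (2 powr (- (real_of_int k * q))) \<partial>count_space {k2..})"
    by (simp add: nn_integral_count_space_indicator)
  also have "\<dots> = (\<integral>\<^sup>+n. ennreal (2 powr (- (real_of_int (k2 + int n) * q))) \<partial>count_space UNIV)"
    using nn_integral_bij_count_space[OF bij, of "\<lambda>k. ennreal (2 powr (- (real_of_int k * q)))"] by simp
  also have "\<dots> = (\<integral>\<^sup>+n. ennreal (2 powr (- (real_of_int k2 * q)) * (2 powr (-q)) ^ n) \<partial>count_space UNIV)"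
  proof (intro nn_integral_cong arg_cong[where f=ennreal])
    fix n :: nat
    have "2 powr (- (real_of_int (k2 + int n) * q)) = 2 powr (- (real_of_int k2 * q) + real n * (-q))"
      by (simp add: algebra_simps)
    also have "\<dots> = 2 powr (- (real_of_int k2 * q)) * (2 powr (-q)) ^ n"
      by (simp only: powr_add, simp add: powr_realpow[symmetric] powr_powr mult.commute)
    finally show "2 powr (- (real_of_int (k2 + int n) * q)) = 2 powr (- (real_of_int k2 * q)) * (2 powr (-q)) ^ n" .
  qed
  also have "\<dots> = ennreal (2 powr (- (real_of_int k2 * q)) / (1 - 2 powr (-q)))"
    by (rule nn_geom_nat) (use assms two_powr_neg_lt1 in auto)
  finally show ?thesis .
qed




lemma set_pow_less: "0 < (Y::real) \<Longrightarrow> {k::int. 2 powr real_of_int k < Y} = {..\<lceil>log 2 Y\<rceil> - 1}"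
  by (auto simp: less_log_iff[symmetric] less_ceiling_iff[symmetric])

lemma set_pow_ge: "0 < (Y::real) \<Longrightarrow> {k::int. Y \<le> 2 powr real_of_int k} = {\<lceil>log 2 Y\<rceil>..}"
  by (auto simp: log_le_iff[symmetric] ceiling_le_iff)

lemma G1:
  fixes Y q :: real
  assumes "0 < Y" "0 < q"
  shows "(\<integral>\<^sup>+k. ennreal (2 powr (real_of_int k * q)) * indicator {k. 2 powr real_of_int k < Y} k \<partial>count_space UNIV)
         \<le> ennreal (Y powr q / (1 - 2 powr (-q)))"
proof -
  define k1 where "k1 = \<lceil>log 2 Y\<rceil> - 1"
  have "k1 \<in> {k::int. 2 powr real_of_int k < Y}" unfolding set_pow_less[OF assms(1)] k1_def by simp
  hence "2 powr real_of_int k1 < Y" by simp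
  hence le: "2 powr (real_of_int k1 * q) \<le> Y powr q"
    using assms by (simp add: powr_powr[symmetric] powr_mono2)
  have d: "0 < 1 - 2 powr (-q)" using two_powr_neg_lt1[OF assms(2)] by simp
  show ?thesis
    unfolding set_pow_less[OF assms(1)] k1_def[symmetric] geom_up[OF assms(2)]
    using le d by (intro ennreal_leI divide_right_mono) auto
qed

lemma G2:
  fixes Y q :: real
  assumes "0 < Y" "0 < q"
  shows "(\<integral>\<^sup>+k. ennreal (2 powr (- (real_of_int k * q))) * indicator {k. Y \<le> 2 powr real_of_int k} k \<partial>count_space UNIV)
         \<le> ennreal (Y powr (-q) / (1 - 2 powr (-q)))"
proof -
  define k2 where "k2 = \<lceil>log 2 Y\<rceil>"
  have "Y \<le> 2 powr real_of_int k2" using set_pow_ge[OF assms(1)] k2_def by auto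
  hence "(2 powr real_of_int k2) powr (-q) \<le> Y powr (-q)"
    using assms by (intro powr_mono2') auto
  hence le: "2 powr (- (real_of_int k2 * q)) \<le> Y powr (-q)"
    by (simp add: powr_powr)
  have d: "0 < 1 - 2 powr (-q)" using two_powr_neg_lt1[OF assms(2)] by simp
  show ?thesis
    unfolding set_pow_ge[OF assms(1)] k2_def[symmetric] geom_down[OF assms(2)]
    using le d by (intro ennreal_leI divide_right_mono) auto
qed

lemma G3:
  fixes T p :: real
  assumes "0 < T" "0 < p"
  shows "ennreal (T powr p) \<le> ennreal (4 powr p) *
     (\<integral>\<^sup>+k. ennreal (2 powr (real_of_int k * p)) * indicator {k. 2 * 2 powr real_of_int k < T} k \<partial>count_space UNIV)"
proof -
  define k0 where "k0 = \<lceil>log 2 T\<rceil> - 2"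
  have "real_of_int k0 + 1 < log 2 T" unfolding k0_def by linarith
  hence "2 powr (real_of_int k0 + 1) < T" using assms by (simp add: less_log_iff)
  hence in1: "2 * 2 powr real_of_int k0 < T" by (simp add: powr_add)
  have "log 2 T \<le> real_of_int k0 + 2" unfolding k0_def by linarith
  hence "T \<le> 2 powr (real_of_int k0 + 2)" using assms by (simp add: log_le_iff)
  hence "T powr p \<le> (2 powr (real_of_int k0 + 2)) powr p" using assms by (intro powr_mono2) auto
  also have "\<dots> = 4 powr p * 2 powr (real_of_int k0 * p)"
  proof -
    have "(2 powr (real_of_int k0 + 2)) powr p = 2 powr (2 * p + real_of_int k0 * p)"
      by (simp add: powr_powr algebra_simps)
    also have "\<dots> = 2 powr (2 * p) * 2 powr (real_of_int k0 * p)" by (rule powr_add)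
    also have "(2::real) powr (2 * p) = 4 powr p"
    proof -
      have "(4::real) powr p = (2 powr 2) powr p" by simp
      also have "\<dots> = 2 powr (2 * p)" by (rule powr_powr)
      finally show ?thesis by simp
    qed
    finally show ?thesis .
  qed
  finally have "ennreal (T powr p) \<le> ennreal (4 powr p) * ennreal (2 powr (real_of_int k0 * p))"
    by (simp add: ennreal_mult''[symmetric] ennreal_leI)
  also have "\<dots> \<le> ennreal (4 powr p) *
     (\<integral>\<^sup>+k. ennreal (2 powr (real_of_int k * p)) * indicator {k. 2 * 2 powr real_of_int k < T} k \<partial>count_space UNIV)"
    using nn_count_ge_point[of k0 UNIV "\<lambda>k. ennreal (2 powr (real_of_int k * p)) * indicator {k. 2 * 2 powr real_of_int k < T} k"] in1
    by (intro mult_left_mono) auto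
  finally show ?thesis .
qed




lemma pow4: "(2::real) ^ (j * 2) = 4 ^ j"
  by (subst mult.commute) (simp add: power_mult)

lemma exists_level:
  fixes R x :: real
  assumes "0 < x" "x < R"
  shows "\<exists>j::nat. R / 2 ^ (j+1) \<le> x \<and> x \<le> R / 2 ^ j"
proof -
  have "\<exists>n::nat. (1/2::real) ^ n < x / R"
    using real_arch_pow_inv[of "x / R" "1/2"] assms by auto
  then have ex: "\<exists>n::nat. R / 2 ^ n \<le> x"
    using assms by (auto simp: field_simps power_divide intro: less_imp_le)
  define j where "j = (LEAST n::nat. R / 2 ^ (n+1) \<le> x)"
  have ex2: "\<exists>n::nat. R / 2 ^ (n+1) \<le> x"
  proof -
    obtain n::nat where "R / 2 ^ n \<le> x" using ex by blast
    moreover have "R / 2 ^ (n+1) \<le> R / 2 ^ n" using assms by (simp add: divide_left_mono)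
    ultimately show ?thesis by (meson order_trans)
  qed
  have j1: "R / 2 ^ (j+1) \<le> x" unfolding j_def by (rule LeastI_ex[OF ex2])
  have j2: "x \<le> R / 2 ^ j"
  proof (cases j)
    case 0 thus ?thesis using assms by simp
  next
    case (Suc i)
    have "\<not> R / 2 ^ (i+1) \<le> x"
    proof
      assume "R / 2 ^ (i+1) \<le> x"
      hence "j \<le> i" unfolding j_def by (rule Least_le)
      thus False using Suc by simp
    qed
    thus ?thesis using Suc by simp
  qed
  show ?thesis using j1 j2 by blast
qed

lemma counting_lemma:
  fixes I :: "'i set" and w \<phi> :: "'i \<Rightarrow> real" and Mp :: ennreal and R :: real
  assumes I: "countable I" and pos: "\<forall>\<xi>\<in>I. 0 < \<phi> \<xi>" and w: "\<forall>\<xi>\<in>I. 0 \<le> w \<xi>"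
    and Mp: "\<And>t. 0 < t \<Longrightarrow> ennreal t * infsum (\<lambda>\<xi>. ennreal (w \<xi>)) {\<xi>\<in>I. t \<le> \<phi> \<xi>} \<le> Mp"
    and R: "0 \<le> R"
  shows "(\<integral>\<^sup>+\<xi>. ennreal (w \<xi> * (\<phi> \<xi>)\<^sup>2) * indicator {\<xi>. \<phi> \<xi> < R} \<xi> \<partial>count_space I)
          \<le> 4 * ennreal R * Mp"
proof (cases "R = 0")
  case True
  have "(\<integral>\<^sup>+\<xi>. ennreal (w \<xi> * (\<phi> \<xi>)\<^sup>2) * indicator {\<xi>. \<phi> \<xi> < R} \<xi> \<partial>count_space I) = (\<integral>\<^sup>+\<xi>. 0 \<partial>count_space I)"
    using pos True by (intro nn_integral_cong) (auto split: split_indicator)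
  thus ?thesis by simp
next
  case False
  hence R0: "0 < R" using R by simp
  define t where "t j = R / 2 ^ (j+1)" for j :: nat
  have tpos: "0 < t j" for j using R0 by (simp add: t_def)
  have pw: "ennreal (w \<xi> * (\<phi> \<xi>)\<^sup>2) * indicator {\<xi>. \<phi> \<xi> < R} \<xi>
      \<le> (\<integral>\<^sup>+j. ennreal (R\<^sup>2 / 4 ^ j) * (ennreal (w \<xi>) * indicator {\<xi>. t j \<le> \<phi> \<xi>} \<xi>) \<partial>count_space UNIV)"
    if xi: "\<xi> \<in> I" for \<xi>
  proof (cases "\<phi> \<xi> < R")
    case False thus ?thesis by simp
  next
    case True
    obtain j where j: "R / 2 ^ (j+1) \<le> \<phi> \<xi>" "\<phi> \<xi> \<le> R / 2 ^ j"
      using exists_level[of "\<phi> \<xi>" R] pos xi True by auto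
    have "(\<phi> \<xi>)\<^sup>2 \<le> (R / 2 ^ j)\<^sup>2" using j pos xi by (intro power_mono) auto
    also have "\<dots> = R\<^sup>2 / 4 ^ j" by (simp add: power_divide power_mult[symmetric] pow4)
    finally have "w \<xi> * (\<phi> \<xi>)\<^sup>2 \<le> R\<^sup>2 / 4 ^ j * w \<xi>" using w xi
      by (metis mult.commute mult_left_mono)
    hence "ennreal (w \<xi> * (\<phi> \<xi>)\<^sup>2) * indicator {\<xi>. \<phi> \<xi> < R} \<xi>
        \<le> ennreal (R\<^sup>2 / 4 ^ j) * (ennreal (w \<xi>) * indicator {\<xi>. t j \<le> \<phi> \<xi>} \<xi>)"
      using True j(1) w xi by (simp add: t_def ennreal_mult''[symmetric] ennreal_leI)
    also have "\<dots> \<le> (\<integral>\<^sup>+j. ennreal (R\<^sup>2 / 4 ^ j) * (ennreal (w \<xi>) * indicator {\<xi>. t j \<le> \<phi> \<xi>} \<xi>) \<partial>count_space UNIV)"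
      by (rule nn_count_ge_point) simp
    finally show ?thesis .
  qed
  have inner: "(\<integral>\<^sup>+\<xi>. ennreal (w \<xi>) * indicator {\<xi>. s \<le> \<phi> \<xi>} \<xi> \<partial>count_space I)
      \<le> infsum (\<lambda>\<xi>. ennreal (w \<xi>)) {\<xi>\<in>I. s \<le> \<phi> \<xi>}" for s
  proof (rule nn_count_le_finite_sums[OF I])
    fix F assume F: "finite F" "F \<subseteq> I"
    have "(\<Sum>\<xi>\<in>F. ennreal (w \<xi>) * indicator {\<xi>. s \<le> \<phi> \<xi>} \<xi>) = (\<Sum>\<xi>\<in>F \<inter> {\<xi>. s \<le> \<phi> \<xi>}. ennreal (w \<xi>))"
      using F by (simp add: sum.inter_restrict indicator_def of_bool_def if_distrib cong: if_cong)
    also have "\<dots> \<le> infsum (\<lambda>\<xi>. ennreal (w \<xi>)) {\<xi>\<in>I. s \<le> \<phi> \<xi>}"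
      using F by (intro infsum_ennreal_ge_finite) auto
    finally show "(\<Sum>\<xi>\<in>F. ennreal (w \<xi>) * indicator {\<xi>. s \<le> \<phi> \<xi>} \<xi>) \<le> infsum (\<lambda>\<xi>. ennreal (w \<xi>)) {\<xi>\<in>I. s \<le> \<phi> \<xi>}" .
  qed
  have termb: "ennreal (R\<^sup>2 / 4 ^ j) * (\<integral>\<^sup>+\<xi>. ennreal (w \<xi>) * indicator {\<xi>. t j \<le> \<phi> \<xi>} \<xi> \<partial>count_space I)
      \<le> ennreal (2 * R * (1/2) ^ j) * Mp" for j
  proof -
    have eq: "R\<^sup>2 / 4 ^ j = (2 * R * (1/2) ^ j) * t j"
      by (simp add: t_def power2_eq_square field_simps power_mult_distrib[symmetric] pow4[symmetric] power_mult[symmetric])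
    have "ennreal (R\<^sup>2 / 4 ^ j) * (\<integral>\<^sup>+\<xi>. ennreal (w \<xi>) * indicator {\<xi>. t j \<le> \<phi> \<xi>} \<xi> \<partial>count_space I)
       = ennreal (2 * R * (1/2) ^ j) * (ennreal (t j) * (\<integral>\<^sup>+\<xi>. ennreal (w \<xi>) * indicator {\<xi>. t j \<le> \<phi> \<xi>} \<xi> \<partial>count_space I))"
      unfolding eq using R0 tpos[of j] by (simp add: ennreal_mult mult.assoc)
    also have "\<dots> \<le> ennreal (2 * R * (1/2) ^ j) * Mp"
      by (intro mult_left_mono order_trans[OF mult_left_mono[OF inner] Mp[OF tpos]]) auto
    finally show ?thesis .
  qed
  have "(\<integral>\<^sup>+\<xi>. ennreal (w \<xi> * (\<phi> \<xi>)\<^sup>2) * indicator {\<xi>. \<phi> \<xi> < R} \<xi> \<partial>count_space I)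
      \<le> (\<integral>\<^sup>+\<xi>. (\<integral>\<^sup>+j. ennreal (R\<^sup>2 / 4 ^ j) * (ennreal (w \<xi>) * indicator {\<xi>. t j \<le> \<phi> \<xi>} \<xi>) \<partial>count_space UNIV) \<partial>count_space I)"
    using pw by (intro nn_integral_mono) auto
  also have "\<dots> = (\<integral>\<^sup>+j. (\<integral>\<^sup>+\<xi>. ennreal (R\<^sup>2 / 4 ^ j) * (ennreal (w \<xi>) * indicator {\<xi>. t j \<le> \<phi> \<xi>} \<xi>) \<partial>count_space I) \<partial>count_space UNIV)"
    by (rule nn_integral_count_space_nn_integral) auto
  also have "\<dots> = (\<integral>\<^sup>+j. ennreal (R\<^sup>2 / 4 ^ j) * (\<integral>\<^sup>+\<xi>. ennreal (w \<xi>) * indicator {\<xi>. t j \<le> \<phi> \<xi>} \<xi> \<partial>count_space I) \<partial>count_space UNIV)"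
    by (intro nn_integral_cong nn_integral_cmult) auto
  also have "\<dots> \<le> (\<integral>\<^sup>+j. ennreal (2 * R * (1/2) ^ j) * Mp \<partial>count_space UNIV)"
    by (intro nn_integral_mono termb)
  also have "\<dots> = (\<integral>\<^sup>+j. ennreal (2 * R * (1/2) ^ j) \<partial>count_space UNIV) * Mp"
    by (rule nn_integral_multc) auto
  also have "(\<integral>\<^sup>+j. ennreal (2 * R * (1/2) ^ j) \<partial>count_space UNIV) = ennreal (2 * R / (1 - 1/2))"
    by (rule nn_geom_nat) (use R in auto)
  also have "ennreal (2 * R / (1 - 1/2)) = 4 * ennreal R"
  proof -
    have "ennreal (2 * R / (1 - 1/2)) = ennreal (4 * R)" by simp
    also have "\<dots> = ennreal 4 * ennreal R" by (rule ennreal_mult) (use R in auto)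
    finally show ?thesis by simp
  qed
  finally show ?thesis .
qed




lemma borel_measurable_cnj [measurable]:
  "f \<in> borel_measurable M \<Longrightarrow> (\<lambda>x. cnj (f x :: complex)) \<in> borel_measurable M"
proof -
  assume f: "f \<in> borel_measurable M"
  have "cnj \<in> borel_measurable borel" by (auto intro!: borel_measurable_continuous_onI continuous_intros)
  from measurable_compose[OF f this] show ?thesis by (simp add: o_def)
qed

lemma in_Lp2_iff: "in_Lp M 2 x \<longleftrightarrow> x \<in> borel_measurable M \<and> integrable M (\<lambda>z. (cmod (x z))\<^sup>2)"
  unfolding in_Lp_def by simp

lemma Lp_norm2: "Lp_norm M 2 x = sqrt (\<integral>z. (cmod (x z))\<^sup>2 \<partial>M)"
  unfolding Lp_norm_def by (simp add: powr_half_sqrt)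

lemma prod_le_sq: "cmod a * cmod b \<le> ((cmod a)\<^sup>2 + (cmod b)\<^sup>2) / 2"
  using sum_squares_bound[of "cmod a" "cmod b"] by (simp add: power2_eq_square)

lemma CS_integrable:
  fixes x y :: "'a \<Rightarrow> complex"
  assumes "in_Lp M 2 x" "in_Lp M 2 y"
  shows "integrable M (\<lambda>z. cmod (x z) * cmod (y z))"
proof -
  have [measurable]: "x \<in> borel_measurable M" "y \<in> borel_measurable M" 
    and i: "integrable M (\<lambda>z. (cmod (x z))\<^sup>2)" "integrable M (\<lambda>z. (cmod (y z))\<^sup>2)"
    using assms by (auto simp: in_Lp2_iff)
  have ii: "integrable M (\<lambda>z. ((cmod (x z))\<^sup>2 + (cmod (y z))\<^sup>2) / 2)" using i by simp
  show ?thesis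
  proof (rule Bochner_Integration.integrable_bound[OF ii])
    show "(\<lambda>z. cmod (x z) * cmod (y z)) \<in> borel_measurable M" by measurable
    show "AE z in M. norm (cmod (x z) * cmod (y z)) \<le> norm (((cmod (x z))\<^sup>2 + (cmod (y z))\<^sup>2) / 2)"
    proof (intro AE_I2)
      fix z
      have "cmod (x z) * cmod (y z) \<le> ((cmod (x z))\<^sup>2 + (cmod (y z))\<^sup>2) / 2" by (rule prod_le_sq)
      thus "norm (cmod (x z) * cmod (y z)) \<le> norm (((cmod (x z))\<^sup>2 + (cmod (y z))\<^sup>2) / 2)" by simp
    qed
  qed
qed

lemma CS_int:
  fixes x y :: "'a \<Rightarrow> complex"
  assumes "in_Lp M 2 x" "in_Lp M 2 y"
  shows "(\<integral>z. cmod (x z) * cmod (y z) \<partial>M) \<le> sqrt (\<integral>z. (cmod (x z))\<^sup>2 \<partial>M) * sqrt (\<integral>z. (cmod (y z))\<^sup>2 \<partial>M)"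
proof -
  have [measurable]: "x \<in> borel_measurable M" "y \<in> borel_measurable M" 
    and i: "integrable M (\<lambda>z. (cmod (x z))\<^sup>2)" "integrable M (\<lambda>z. (cmod (y z))\<^sup>2)"
    using assms by (auto simp: in_Lp2_iff)
  have ixy: "integrable M (\<lambda>z. cmod (x z) * cmod (y z))" by (rule CS_integrable[OF assms])
  have "(\<integral>\<^sup>+z. ennreal (cmod (x z)) * ennreal (cmod (y z)) \<partial>M)\<^sup>2
      \<le> (\<integral>\<^sup>+z. ennreal (cmod (x z)) ^ 2 \<partial>M) * (\<integral>\<^sup>+z. ennreal (cmod (y z)) ^ 2 \<partial>M)"
    by (rule Cauchy_Schwarz_nn_integral) auto
  also have "(\<integral>\<^sup>+z. ennreal (cmod (x z)) * ennreal (cmod (y z)) \<partial>M) = ennreal (\<integral>z. cmod (x z) * cmod (y z) \<partial>M)"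
    by (simp add: ennreal_mult[symmetric] nn_integral_eq_integral[OF ixy])
  also have "(\<integral>\<^sup>+z. ennreal (cmod (x z)) ^ 2 \<partial>M) = ennreal (\<integral>z. (cmod (x z))\<^sup>2 \<partial>M)"
  proof -
    have "(\<integral>\<^sup>+z. ennreal (cmod (x z)) ^ 2 \<partial>M) = (\<integral>\<^sup>+z. ennreal ((cmod (x z))\<^sup>2) \<partial>M)"
      by (simp add: ennreal_power)
    also have "\<dots> = ennreal (\<integral>z. (cmod (x z))\<^sup>2 \<partial>M)"
      by (rule nn_integral_eq_integral[OF i(1)]) auto
    finally show ?thesis .
  qed
  also have "(\<integral>\<^sup>+z. ennreal (cmod (y z)) ^ 2 \<partial>M) = ennreal (\<integral>z. (cmod (y z))\<^sup>2 \<partial>M)"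
  proof -
    have "(\<integral>\<^sup>+z. ennreal (cmod (y z)) ^ 2 \<partial>M) = (\<integral>\<^sup>+z. ennreal ((cmod (y z))\<^sup>2) \<partial>M)"
      by (simp add: ennreal_power)
    also have "\<dots> = ennreal (\<integral>z. (cmod (y z))\<^sup>2 \<partial>M)"
      by (rule nn_integral_eq_integral[OF i(2)]) auto
    finally show ?thesis .
  qed
  finally have "(\<integral>z. cmod (x z) * cmod (y z) \<partial>M)\<^sup>2 \<le> (\<integral>z. (cmod (x z))\<^sup>2 \<partial>M) * (\<integral>z. (cmod (y z))\<^sup>2 \<partial>M)"
    by (simp add: ennreal_power ennreal_mult''[symmetric] integral_nonneg_AE)
  hence "sqrt ((\<integral>z. cmod (x z) * cmod (y z) \<partial>M)\<^sup>2) \<le> sqrt ((\<integral>z. (cmod (x z))\<^sup>2 \<partial>M) * (\<integral>z. (cmod (y z))\<^sup>2 \<partial>M))"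
    by (rule real_sqrt_le_mono)
  thus ?thesis by (simp add: real_sqrt_mult integral_nonneg_AE)
qed

lemma inner_integrable:
  fixes x y :: "'a \<Rightarrow> complex"
  assumes "in_Lp M 2 x" "in_Lp M 2 y"
  shows "integrable M (\<lambda>z. x z * cnj (y z))"
proof -
  have [measurable]: "x \<in> borel_measurable M" "y \<in> borel_measurable M"
    using assms by (auto simp: in_Lp2_iff)
  show ?thesis
    by (rule Bochner_Integration.integrable_bound[OF CS_integrable[OF assms]]) (measurable, simp add: norm_mult)
qed

lemma FL_CS:
  fixes x y :: "'a \<Rightarrow> complex"
  assumes "in_Lp M 2 x" "in_Lp M 2 y"
  shows "cmod (\<integral>z. x z * cnj (y z) \<partial>M) \<le> sqrt (\<integral>z. (cmod (x z))\<^sup>2 \<partial>M) * sqrt (\<integral>z. (cmod (y z))\<^sup>2 \<partial>M)"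
proof -
  have "cmod (\<integral>z. x z * cnj (y z) \<partial>M) \<le> (\<integral>z. cmod (x z * cnj (y z)) \<partial>M)" by (rule integral_norm_bound)
  also have "\<dots> = (\<integral>z. cmod (x z) * cmod (y z) \<partial>M)" by (simp add: norm_mult)
  also have "\<dots> \<le> sqrt (\<integral>z. (cmod (x z))\<^sup>2 \<partial>M) * sqrt (\<integral>z. (cmod (y z))\<^sup>2 \<partial>M)" by (rule CS_int[OF assms])
  finally show ?thesis .
qed

lemma L2_add:
  fixes x y :: "'a \<Rightarrow> complex"
  assumes "in_Lp M 2 x" "in_Lp M 2 y"
  shows "in_Lp M 2 (\<lambda>z. x z + y z)"
proof -
  have [measurable]: "x \<in> borel_measurable M" "y \<in> borel_measurable M" 
    and i: "integrable M (\<lambda>z. (cmod (x z))\<^sup>2)" "integrable M (\<lambda>z. (cmod (y z))\<^sup>2)"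
    using assms by (auto simp: in_Lp2_iff)
  have b: "(cmod (a + b))\<^sup>2 \<le> 2 * (cmod a)\<^sup>2 + 2 * (cmod b)\<^sup>2" for a b :: complex
  proof -
    have "(cmod (a + b))\<^sup>2 \<le> (cmod a + cmod b)\<^sup>2" by (intro power_mono norm_triangle_ineq) auto
    also have "\<dots> \<le> 2 * (cmod a)\<^sup>2 + 2 * (cmod b)\<^sup>2"
      using prod_le_sq[of a b] by (simp add: power2_eq_square algebra_simps)
    finally show ?thesis .
  qed
  have ii: "integrable M (\<lambda>z. 2 * (cmod (x z))\<^sup>2 + 2 * (cmod (y z))\<^sup>2)" using i by simp
  have "integrable M (\<lambda>z. (cmod (x z + y z))\<^sup>2)"
    by (rule Bochner_Integration.integrable_bound[OF ii]) (simp_all add: b)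
  moreover have "(\<lambda>z. x z + y z) \<in> borel_measurable M" by measurable
  ultimately show ?thesis unfolding in_Lp2_iff by simp
qed

lemma L2_cmult:
  fixes x :: "'a \<Rightarrow> complex"
  assumes "in_Lp M 2 x"
  shows "in_Lp M 2 (\<lambda>z. c * x z)"
proof -
  have [measurable]: "x \<in> borel_measurable M" and i: "integrable M (\<lambda>z. (cmod (x z))\<^sup>2)"
    using assms by (auto simp: in_Lp2_iff)
  have "integrable M (\<lambda>z. (cmod c)\<^sup>2 * (cmod (x z))\<^sup>2)" using i by simp
  hence "integrable M (\<lambda>z. (cmod (c * x z))\<^sup>2)" by (simp add: norm_mult power_mult_distrib)
  moreover have "(\<lambda>z. c * x z) \<in> borel_measurable M" by measurable
  ultimately show ?thesis unfolding in_Lp2_iff by simp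
qed

lemma L2_sum:
  fixes x :: "'i \<Rightarrow> 'a \<Rightarrow> complex"
  assumes "finite G" "\<And>i. i \<in> G \<Longrightarrow> in_Lp M 2 (x i)"
  shows "in_Lp M 2 (\<lambda>z. \<Sum>i\<in>G. x i z)"
  using assms
proof (induction G rule: finite_induct)
  case empty thus ?case by (simp add: in_Lp2_iff)
next
  case (insert a G) thus ?case by (simp add: L2_add)
qed

lemma L2_minkowski:
  fixes x y :: "'a \<Rightarrow> complex"
  assumes "in_Lp M 2 x" "in_Lp M 2 y"
  shows "Lp_norm M 2 (\<lambda>z. x z + y z) \<le> Lp_norm M 2 x + Lp_norm M 2 y"
proof -
  have [measurable]: "x \<in> borel_measurable M" "y \<in> borel_measurable M" 
    and i: "integrable M (\<lambda>z. (cmod (x z))\<^sup>2)" "integrable M (\<lambda>z. (cmod (y z))\<^sup>2)"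
    using assms by (auto simp: in_Lp2_iff)
  have ixy: "integrable M (\<lambda>z. cmod (x z) * cmod (y z))" by (rule CS_integrable[OF assms])
  have s: "integrable M (\<lambda>z. (cmod (x z + y z))\<^sup>2)" using L2_add[OF assms] by (simp add: in_Lp2_iff)
  define A where "A = (\<integral>z. (cmod (x z))\<^sup>2 \<partial>M)"
  define B where "B = (\<integral>z. (cmod (y z))\<^sup>2 \<partial>M)"
  have A0: "0 \<le> A" "0 \<le> B" unfolding A_def B_def by (auto intro: integral_nonneg_AE)
  have "(\<integral>z. (cmod (x z + y z))\<^sup>2 \<partial>M) \<le> (\<integral>z. (cmod (x z))\<^sup>2 + 2 * (cmod (x z) * cmod (y z)) + (cmod (y z))\<^sup>2 \<partial>M)"
  proof (rule integral_mono)
    show "integrable M (\<lambda>z. (cmod (x z))\<^sup>2 + 2 * (cmod (x z) * cmod (y z)) + (cmod (y z))\<^sup>2)"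
      using i ixy by auto
    fix z
    have "(cmod (x z + y z))\<^sup>2 \<le> (cmod (x z) + cmod (y z))\<^sup>2" by (intro power_mono norm_triangle_ineq) auto
    thus "(cmod (x z + y z))\<^sup>2 \<le> (cmod (x z))\<^sup>2 + 2 * (cmod (x z) * cmod (y z)) + (cmod (y z))\<^sup>2"
      by (simp add: power2_eq_square algebra_simps)
  qed (use s in auto)
  also have "\<dots> = A + 2 * (\<integral>z. cmod (x z) * cmod (y z) \<partial>M) + B"
    unfolding A_def B_def using i ixy by simp
  also have "\<dots> \<le> A + 2 * (sqrt A * sqrt B) + B"
    using CS_int[OF assms] unfolding A_def B_def by simp
  also have "\<dots> = (sqrt A + sqrt B)\<^sup>2" using A0 by (simp add: power2_eq_square algebra_simps)
  finally have "sqrt (\<integral>z. (cmod (x z + y z))\<^sup>2 \<partial>M) \<le> sqrt ((sqrt A + sqrt B)\<^sup>2)" by (rule real_sqrt_le_mono)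
  thus ?thesis unfolding Lp_norm2 A_def[symmetric] B_def[symmetric] using A0 by simp
qed




lemma FL_sum_basis:
  assumes u2: "\<forall>\<xi>\<in>I. in_Lp M 2 (u \<xi>)" and v2: "\<forall>\<xi>\<in>I. in_Lp M 2 (v \<xi>)"
    and biorth: "\<forall>\<xi>\<in>I. \<forall>\<eta>\<in>I. L2_inner M (u \<xi>) (v \<eta>) = (if \<xi> = \<eta> then 1 else 0)"
    and G: "finite G" "G \<subseteq> I" and xi: "\<xi> \<in> I"
  shows "FL M v (\<lambda>x. \<Sum>\<eta>\<in>G. c \<eta> * u \<eta> x) \<xi> = (if \<xi> \<in> G then c \<xi> else 0)"
proof -
  have "FL M v (\<lambda>x. \<Sum>\<eta>\<in>G. c \<eta> * u \<eta> x) \<xi> = (\<integral>x. (\<Sum>\<eta>\<in>G. c \<eta> * (u \<eta> x * cnj (v \<xi> x))) \<partial>M)"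
    unfolding FL_def by (simp add: sum_distrib_right mult.assoc)
  also have "\<dots> = (\<Sum>\<eta>\<in>G. (\<integral>x. c \<eta> * (u \<eta> x * cnj (v \<xi> x)) \<partial>M))"
  proof (rule Bochner_Integration.integral_sum[where f="\<lambda>\<eta> x. c \<eta> * (u \<eta> x * cnj (v \<xi> x))"])
    fix \<eta> assume "\<eta> \<in> G"
    hence "integrable M (\<lambda>x. u \<eta> x * cnj (v \<xi> x))"
      using G u2 v2 xi by (intro inner_integrable) auto
    thus "integrable M (\<lambda>x. c \<eta> * (u \<eta> x * cnj (v \<xi> x)))" by simp
  qed
  also have "\<dots> = (\<Sum>\<eta>\<in>G. c \<eta> * L2_inner M (u \<eta>) (v \<xi>))"
    unfolding L2_inner_def by simp
  also have "\<dots> = (\<Sum>\<eta>\<in>G. if \<eta> = \<xi> then c \<eta> else 0)"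
    using G biorth xi by (intro sum.cong) auto
  also have "\<dots> = (if \<xi> \<in> G then c \<xi> else 0)"
    using G by (simp add: sum.delta')
  finally show ?thesis .
qed

lemma bessel:
  assumes I: "countable I"
    and v_norm: "\<forall>\<xi>\<in>I. in_Lp M 2 (v \<xi>) \<and> Lp_norm M 2 (v \<xi>) = 1"
    and biorth: "\<forall>\<xi>\<in>I. \<forall>\<eta>\<in>I. L2_inner M (u \<xi>) (v \<eta>) = (if \<xi> = \<eta> then 1 else 0)"
    and riesz: "riesz_basis M I u"
  shows "\<exists>B>0. \<forall>h. in_Lp M 2 h \<longrightarrow>
     (\<integral>\<^sup>+\<xi>. ennreal ((cmod (FL M v h \<xi>))\<^sup>2) \<partial>count_space I) \<le> ennreal (B * (\<integral>x. (cmod (h x))\<^sup>2 \<partial>M))"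
proof -
  have u2: "\<forall>\<xi>\<in>I. in_Lp M 2 (u \<xi>)" using riesz unfolding riesz_basis_def by blast
  have v2: "\<forall>\<xi>\<in>I. in_Lp M 2 (v \<xi>)" using v_norm by blast
  have compl0: "\<forall>f. in_Lp M 2 f \<longrightarrow> (\<forall>\<epsilon>>0. \<exists>F c. finite F \<and> F \<subseteq> I \<and>
          Lp_norm M 2 (\<lambda>x. f x - (\<Sum>\<xi>\<in>F. c \<xi> * u \<xi> x)) < \<epsilon>)"
    using riesz unfolding riesz_basis_def by (elim conjE)
  have compl: "\<And>f \<epsilon>. in_Lp M 2 f \<Longrightarrow> \<epsilon> > 0 \<Longrightarrow> \<exists>F c. finite F \<and> F \<subseteq> I \<and>
          Lp_norm M 2 (\<lambda>x. f x - (\<Sum>\<xi>\<in>F. c \<xi> * u \<xi> x)) < \<epsilon>"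
    using compl0 by blast
  obtain A where A: "A > 0" and Alow: "\<And>F c. finite F \<Longrightarrow> F \<subseteq> I \<Longrightarrow>
          A * (\<Sum>\<xi>\<in>F. (cmod (c \<xi>))\<^sup>2) \<le> (Lp_norm M 2 (\<lambda>x. \<Sum>\<xi>\<in>F. c \<xi> * u \<xi> x))\<^sup>2"
  proof -
    have "\<exists>A B. 0 < A \<and> 0 < B \<and> (\<forall>F c. finite F \<longrightarrow> F \<subseteq> I \<longrightarrow>
          A * (\<Sum>\<xi>\<in>F. (cmod (c \<xi>))\<^sup>2) \<le> (Lp_norm M 2 (\<lambda>x. \<Sum>\<xi>\<in>F. c \<xi> * u \<xi> x))\<^sup>2 \<and>
          (Lp_norm M 2 (\<lambda>x. \<Sum>\<xi>\<in>F. c \<xi> * u \<xi> x))\<^sup>2 \<le> B * (\<Sum>\<xi>\<in>F. (cmod (c \<xi>))\<^sup>2))"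
      using riesz unfolding riesz_basis_def by (elim conjE)
    then obtain A B where "0 < A" and "\<forall>F c. finite F \<longrightarrow> F \<subseteq> I \<longrightarrow>
          A * (\<Sum>\<xi>\<in>F. (cmod (c \<xi>))\<^sup>2) \<le> (Lp_norm M 2 (\<lambda>x. \<Sum>\<xi>\<in>F. c \<xi> * u \<xi> x))\<^sup>2 \<and>
          (Lp_norm M 2 (\<lambda>x. \<Sum>\<xi>\<in>F. c \<xi> * u \<xi> x))\<^sup>2 \<le> B * (\<Sum>\<xi>\<in>F. (cmod (c \<xi>))\<^sup>2)"
      by (elim exE conjE)
    thus ?thesis using that by meson
  qed
  have main: "(\<Sum>\<xi>\<in>F. (cmod (FL M v h \<xi>))\<^sup>2) \<le> 1 / A * (\<integral>x. (cmod (h x))\<^sup>2 \<partial>M)"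
    if h: "in_Lp M 2 h" and F: "finite F" "F \<subseteq> I" for h F
  proof -
    define N where "N = Lp_norm M 2 h"
    define S where "S = L2_set (\<lambda>\<xi>. cmod (FL M v h \<xi>)) F"
    have N0: "0 \<le> N" unfolding N_def Lp_norm2 by simp
    have key: "S \<le> N / sqrt A + \<epsilon> * (1 / sqrt A + sqrt (real (card F)))" if e: "\<epsilon> > 0" for \<epsilon>
    proof -
      obtain G c where G: "finite G" "G \<subseteq> I" and appr: "Lp_norm M 2 (\<lambda>x. h x - (\<Sum>\<eta>\<in>G. c \<eta> * u \<eta> x)) < \<epsilon>"
        using compl[OF h e] by blast
      define g where "g = (\<lambda>x. \<Sum>\<eta>\<in>G. c \<eta> * u \<eta> x)"
      define d where "d = (\<lambda>x. h x - g x)"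
      have g2: "in_Lp M 2 g" unfolding g_def using G u2 by (intro L2_sum L2_cmult) auto
      have mg2: "in_Lp M 2 (\<lambda>x. - 1 * g x)" by (rule L2_cmult[OF g2])
      have d2: "in_Lp M 2 d" using L2_add[OF h mg2] unfolding d_def by simp
      have dn: "Lp_norm M 2 d < \<epsilon>" using appr unfolding d_def g_def .
      have split: "FL M v h \<xi> = FL M v g \<xi> + FL M v d \<xi>" if "\<xi> \<in> I" for \<xi>
      proof -
        have "FL M v h \<xi> = (\<integral>x. g x * cnj (v \<xi> x) + d x * cnj (v \<xi> x) \<partial>M)"
          unfolding FL_def d_def by (simp add: algebra_simps)
        also have "\<dots> = FL M v g \<xi> + FL M v d \<xi>"
          unfolding FL_def using inner_integrable[OF g2] inner_integrable[OF d2] v2 that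
          by (intro Bochner_Integration.integral_add) auto
        finally show ?thesis .
      qed
      have dbound: "cmod (FL M v d \<xi>) \<le> Lp_norm M 2 d" if "\<xi> \<in> I" for \<xi>
        using FL_CS[OF d2, of "v \<xi>"] v_norm that unfolding FL_def Lp_norm2 by auto
      have gval: "FL M v g \<xi> = (if \<xi> \<in> G then c \<xi> else 0)" if "\<xi> \<in> I" for \<xi>
        unfolding g_def by (rule FL_sum_basis[OF u2 v2 biorth G that])
      have "S \<le> L2_set (\<lambda>\<xi>. cmod (FL M v g \<xi>) + cmod (FL M v d \<xi>)) F"
        unfolding S_def using F split by (intro L2_set_mono) (auto simp: norm_triangle_ineq subset_iff)
      also have "\<dots> \<le> L2_set (\<lambda>\<xi>. cmod (FL M v g \<xi>)) F + L2_set (\<lambda>\<xi>. cmod (FL M v d \<xi>)) F"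
        by (rule L2_set_triangle_ineq)
      also have "L2_set (\<lambda>\<xi>. cmod (FL M v d \<xi>)) F \<le> L2_set (\<lambda>\<xi>. \<epsilon>) F"
      proof (rule L2_set_mono)
        fix i assume "i \<in> F"
        hence "i \<in> I" using F by auto
        thus "cmod (FL M v d i) \<le> \<epsilon>" using dbound[of i] dn by linarith
      qed simp
      also have "L2_set (\<lambda>\<xi>. \<epsilon>) F = sqrt (real (card F)) * \<epsilon>"
        using e by (simp add: L2_set_constant)
      also have "L2_set (\<lambda>\<xi>. cmod (FL M v g \<xi>)) F \<le> (N + \<epsilon>) / sqrt A"
      proof -
        have "L2_set (\<lambda>\<xi>. cmod (FL M v g \<xi>)) F = sqrt (\<Sum>\<xi>\<in>F. (cmod (FL M v g \<xi>))\<^sup>2)"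
          unfolding L2_set_def by simp
        also have "(\<Sum>\<xi>\<in>F. (cmod (FL M v g \<xi>))\<^sup>2) = (\<Sum>\<xi>\<in>F. if \<xi> \<in> G then (cmod (c \<xi>))\<^sup>2 else 0)"
          using F gval by (intro sum.cong) auto
        also have "\<dots> = (\<Sum>\<xi>\<in>F \<inter> G. (cmod (c \<xi>))\<^sup>2)"
          using F by (simp add: sum.inter_restrict)
        also have "\<dots> \<le> (\<Sum>\<xi>\<in>G. (cmod (c \<xi>))\<^sup>2)"
          using G by (intro sum_mono2) auto
        also have "\<dots> \<le> (Lp_norm M 2 g)\<^sup>2 / A"
          using Alow[OF G, of c] A unfolding g_def by (simp add: field_simps)
        finally have "L2_set (\<lambda>\<xi>. cmod (FL M v g \<xi>)) F \<le> sqrt ((Lp_norm M 2 g)\<^sup>2 / A)"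
          by (simp add: real_sqrt_le_mono)
        also have "\<dots> = Lp_norm M 2 g / sqrt A"
          by (simp add: real_sqrt_divide Lp_norm2)
        also have "Lp_norm M 2 g \<le> N + \<epsilon>"
        proof -
          have md2: "in_Lp M 2 (\<lambda>x. - 1 * d x)" by (rule L2_cmult[OF d2])
          have "g = (\<lambda>x. h x + - 1 * d x)" unfolding d_def by auto
          hence "Lp_norm M 2 g \<le> Lp_norm M 2 h + Lp_norm M 2 (\<lambda>x. - 1 * d x)"
            using L2_minkowski[OF h md2] by simp
          also have "Lp_norm M 2 (\<lambda>x. - 1 * d x) = Lp_norm M 2 d" unfolding Lp_norm2 by simp
          finally show ?thesis using dn unfolding N_def by simp
        qed
        hence "Lp_norm M 2 g / sqrt A \<le> (N + \<epsilon>) / sqrt A" using A by (simp add: divide_right_mono)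
        finally show ?thesis .
      qed
      finally have "S \<le> \<epsilon> * sqrt (real (card F)) + (N + \<epsilon>) / sqrt A" by (simp add: mult.commute add.commute)
      moreover have "(N + \<epsilon>) / sqrt A = N / sqrt A + \<epsilon> / sqrt A" by (simp add: add_divide_distrib)
      ultimately show ?thesis by (simp add: algebra_simps)
    qed
    have "S \<le> N / sqrt A"
    proof (rule field_le_epsilon)
      fix e :: real assume e: "0 < e"
      define D where "D = 1 / sqrt A + sqrt (real (card F))"
      have D: "0 < D" unfolding D_def using A by (simp add: add_pos_nonneg)
      have "S \<le> N / sqrt A + (e / D) * D" using key[of "e / D"] e D unfolding D_def by simp
      thus "S \<le> N / sqrt A + e" using D by simp
    qed
    hence "S\<^sup>2 \<le> (N / sqrt A)\<^sup>2" unfolding S_def by (intro power_mono) auto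
    also have "(N / sqrt A)\<^sup>2 = 1 / A * (\<integral>x. (cmod (h x))\<^sup>2 \<partial>M)"
      using A unfolding N_def Lp_norm2 by (simp add: power_divide integral_nonneg_AE)
    also have "S\<^sup>2 = (\<Sum>\<xi>\<in>F. (cmod (FL M v h \<xi>))\<^sup>2)"
      unfolding S_def L2_set_def by (simp add: sum_nonneg)
    finally show ?thesis .
  qed
  show ?thesis
  proof (intro exI[of _ "1 / A"] conjI allI impI)
    show "0 < 1 / A" using A by simp
    fix h assume h: "in_Lp M 2 h"
    show "(\<integral>\<^sup>+\<xi>. ennreal ((cmod (FL M v h \<xi>))\<^sup>2) \<partial>count_space I) \<le> ennreal (1 / A * (\<integral>x. (cmod (h x))\<^sup>2 \<partial>M))"
    proof (rule nn_count_le_finite_sums[OF I])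
      fix F assume F: "finite F" "F \<subseteq> I"
      have "(\<Sum>\<xi>\<in>F. ennreal ((cmod (FL M v h \<xi>))\<^sup>2)) = ennreal (\<Sum>\<xi>\<in>F. (cmod (FL M v h \<xi>))\<^sup>2)"
        by (rule sum_ennreal) auto
      also have "\<dots> \<le> ennreal (1 / A * (\<integral>x. (cmod (h x))\<^sup>2 \<partial>M))"
        by (rule ennreal_leI[OF main[OF h F]])
      finally show "(\<Sum>\<xi>\<in>F. ennreal ((cmod (FL M v h \<xi>))\<^sup>2)) \<le> ennreal (1 / A * (\<integral>x. (cmod (h x))\<^sup>2 \<partial>M))" .
    qed
  qed
qed




lemma Linf_AE:
  assumes "in_Linf M w"
  shows "AE x in M. cmod (w x) \<le> Linf_norm M w"
proof -
  have fin: "esssup M (\<lambda>x. ennreal (cmod (w x))) \<noteq> top" using assms unfolding in_Linf_def by auto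
  have "AE x in M. ennreal (cmod (w x)) \<le> esssup M (\<lambda>x. ennreal (cmod (w x)))" by (rule esssup_AE)
  thus ?thesis
  proof (rule eventually_mono)
    fix x assume "ennreal (cmod (w x)) \<le> esssup M (\<lambda>x. ennreal (cmod (w x)))"
    hence "enn2real (ennreal (cmod (w x))) \<le> enn2real (esssup M (\<lambda>x. ennreal (cmod (w x))))"
      using fin by (intro enn2real_mono) (auto simp: top.not_eq_extremum)
    thus "cmod (w x) \<le> Linf_norm M w" by (simp add: Linf_norm_def)
  qed
qed

lemma Linf_nonneg: "0 \<le> Linf_norm M w"
  unfolding Linf_norm_def by simp

lemma Linf_pos:
  assumes "in_Lp M 2 w" "Lp_norm M 2 w = 1" "in_Linf M w"
  shows "0 < Linf_norm M w"
proof (rule ccontr)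
  assume "\<not> 0 < Linf_norm M w"
  hence z: "Linf_norm M w = 0" using Linf_nonneg[of M w] by simp
  have "AE x in M. (cmod (w x))\<^sup>2 = 0" using Linf_AE[OF assms(3)] unfolding z
    by (rule eventually_mono) simp
  hence "(\<integral>x. (cmod (w x))\<^sup>2 \<partial>M) = 0" by (simp add: integral_eq_zero_AE)
  hence "Lp_norm M 2 w = 0" unfolding Lp_norm2 by simp
  thus False using assms(2) by simp
qed

lemma FL_L1:
  fixes g w :: "'a \<Rightarrow> complex"
  assumes g[measurable]: "g \<in> borel_measurable M" and gi: "integrable M (\<lambda>x. cmod (g x))" and w: "in_Linf M w"
  shows "integrable M (\<lambda>x. g x * cnj (w x))"
    and "cmod (\<integral>x. g x * cnj (w x) \<partial>M) \<le> Linf_norm M w * (\<integral>x. cmod (g x) \<partial>M)"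
proof -
  have [measurable]: "w \<in> borel_measurable M" using w unfolding in_Linf_def by simp
  have ii: "integrable M (\<lambda>x. Linf_norm M w * cmod (g x))" using gi by simp
  have ae: "AE x in M. cmod (g x * cnj (w x)) \<le> Linf_norm M w * cmod (g x)"
    using Linf_AE[OF w] by (rule eventually_mono) (simp add: norm_mult, metis mult.commute mult_left_mono norm_ge_zero)
  show i: "integrable M (\<lambda>x. g x * cnj (w x))"
  proof (rule Bochner_Integration.integrable_bound[OF ii])
    show "(\<lambda>x. g x * cnj (w x)) \<in> borel_measurable M" by measurable
    show "AE x in M. norm (g x * cnj (w x)) \<le> norm (Linf_norm M w * cmod (g x))"
      using ae by (rule eventually_mono) (simp add: Linf_nonneg)
  qed
  have "cmod (\<integral>x. g x * cnj (w x) \<partial>M) \<le> (\<integral>x. cmod (g x * cnj (w x)) \<partial>M)" by (rule integral_norm_bound)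
  also have "\<dots> \<le> (\<integral>x. Linf_norm M w * cmod (g x) \<partial>M)"
    by (rule integral_mono_AE) (use i ii ae in auto)
  also have "\<dots> = Linf_norm M w * (\<integral>x. cmod (g x) \<partial>M)" by simp
  finally show "cmod (\<integral>x. g x * cnj (w x) \<partial>M) \<le> Linf_norm M w * (\<integral>x. cmod (g x) \<partial>M)" .
qed

lemma high_bound:
  fixes y lam p :: real
  assumes "0 < lam" "lam < y" "1 \<le> p"
  shows "y \<le> y powr p / lam powr (p - 1)"
proof -
  have "lam powr (p - 1) \<le> y powr (p - 1)" using assms by (intro powr_mono2) auto
  hence "y * lam powr (p - 1) \<le> y * y powr (p - 1)" using assms by (intro mult_left_mono) auto
  also have "y * y powr (p - 1) = y powr p" using assms by (simp add: powr_mult_base)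
  finally show ?thesis using assms by (simp add: field_simps)
qed

lemma low_bound:
  fixes y lam p :: real
  assumes "0 \<le> y" "y \<le> lam" "p \<le> 2"
  shows "y\<^sup>2 \<le> lam powr (2 - p) * y powr p"
proof (cases "y = 0")
  case True thus ?thesis by simp
next
  case False
  hence y0: "0 < y" using assms by simp
  have "y\<^sup>2 = y powr (2 - p) * y powr p" using y0 by (simp add: powr_add[symmetric])
  also have "\<dots> \<le> lam powr (2 - p) * y powr p" using assms y0 by (intro mult_right_mono powr_mono2) auto
  finally show ?thesis .
qed




lemma decomp:
  fixes f :: "'a \<Rightarrow> complex" and p lam :: real
  assumes f: "in_Lp M p f" and p: "1 \<le> p" "p \<le> 2" and lam: "0 < lam"
    and g_def: "g = (\<lambda>x. if lam < cmod (f x) then f x else 0)"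
    and h_def: "h = (\<lambda>x. if lam < cmod (f x) then 0 else f x)"
  shows "g \<in> borel_measurable M" "integrable M (\<lambda>x. cmod (g x))"
    "ennreal (\<integral>x. cmod (g x) \<partial>M) = (\<integral>\<^sup>+x. (if lam < cmod (f x) then ennreal (cmod (f x)) else 0) \<partial>M)"
    "in_Lp M 2 h"
    "ennreal (\<integral>x. (cmod (h x))\<^sup>2 \<partial>M) = (\<integral>\<^sup>+x. (if lam < cmod (f x) then 0 else ennreal ((cmod (f x))\<^sup>2)) \<partial>M)"
    "\<And>w. in_Lp M 2 w \<Longrightarrow> in_Linf M w \<Longrightarrow>
        (\<integral>x. f x * cnj (w x) \<partial>M) = (\<integral>x. g x * cnj (w x) \<partial>M) + (\<integral>x. h x * cnj (w x) \<partial>M)"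
proof -
  have fm[measurable]: "f \<in> borel_measurable M" and fi: "integrable M (\<lambda>x. cmod (f x) powr p)"
    using f unfolding in_Lp_def by auto
  show gm: "g \<in> borel_measurable M" unfolding g_def by measurable
  have hm[measurable]: "h \<in> borel_measurable M" unfolding h_def by measurable
  have gi: "integrable M (\<lambda>x. cmod (g x))"
  proof (rule Bochner_Integration.integrable_bound)
    show "integrable M (\<lambda>x. cmod (f x) powr p / lam powr (p - 1))" using fi by simp
    show "(\<lambda>x. cmod (g x)) \<in> borel_measurable M" using gm by measurable
    show "AE x in M. norm (cmod (g x)) \<le> norm (cmod (f x) powr p / lam powr (p - 1))"
    proof (intro AE_I2)
      fix x
      show "norm (cmod (g x)) \<le> norm (cmod (f x) powr p / lam powr (p - 1))"
        using high_bound[OF lam, of "cmod (f x)" p] p unfolding g_def by auto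
    qed
  qed
  thus "integrable M (\<lambda>x. cmod (g x))" .
  have "ennreal (\<integral>x. cmod (g x) \<partial>M) = (\<integral>\<^sup>+x. ennreal (cmod (g x)) \<partial>M)"
    by (rule nn_integral_eq_integral[OF gi, symmetric]) auto
  also have "\<dots> = (\<integral>\<^sup>+x. (if lam < cmod (f x) then ennreal (cmod (f x)) else 0) \<partial>M)"
    unfolding g_def by (intro nn_integral_cong) auto
  finally show "ennreal (\<integral>x. cmod (g x) \<partial>M) = (\<integral>\<^sup>+x. (if lam < cmod (f x) then ennreal (cmod (f x)) else 0) \<partial>M)" .
  have hi: "integrable M (\<lambda>x. (cmod (h x))\<^sup>2)"
  proof (rule Bochner_Integration.integrable_bound)
    show "integrable M (\<lambda>x. lam powr (2 - p) * cmod (f x) powr p)" using fi by simp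
    show "(\<lambda>x. (cmod (h x))\<^sup>2) \<in> borel_measurable M" by measurable
    show "AE x in M. norm ((cmod (h x))\<^sup>2) \<le> norm (lam powr (2 - p) * cmod (f x) powr p)"
    proof (intro AE_I2)
      fix x
      show "norm ((cmod (h x))\<^sup>2) \<le> norm (lam powr (2 - p) * cmod (f x) powr p)"
        using low_bound[of "cmod (f x)" lam p] p unfolding h_def by auto
    qed
  qed
  show h2: "in_Lp M 2 h" unfolding in_Lp2_iff using hi by simp
  have "ennreal (\<integral>x. (cmod (h x))\<^sup>2 \<partial>M) = (\<integral>\<^sup>+x. ennreal ((cmod (h x))\<^sup>2) \<partial>M)"
    by (rule nn_integral_eq_integral[OF hi, symmetric]) auto
  also have "\<dots> = (\<integral>\<^sup>+x. (if lam < cmod (f x) then 0 else ennreal ((cmod (f x))\<^sup>2)) \<partial>M)"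
    unfolding h_def by (intro nn_integral_cong) auto
  finally show "ennreal (\<integral>x. (cmod (h x))\<^sup>2 \<partial>M) = (\<integral>\<^sup>+x. (if lam < cmod (f x) then 0 else ennreal ((cmod (f x))\<^sup>2)) \<partial>M)" .
  fix w assume w2: "in_Lp M 2 w" and wi: "in_Linf M w"
  have "(\<integral>x. f x * cnj (w x) \<partial>M) = (\<integral>x. g x * cnj (w x) + h x * cnj (w x) \<partial>M)"
    unfolding g_def h_def by (intro Bochner_Integration.integral_cong) auto
  also have "\<dots> = (\<integral>x. g x * cnj (w x) \<partial>M) + (\<integral>x. h x * cnj (w x) \<partial>M)"
    by (rule Bochner_Integration.integral_add[OF FL_L1(1)[OF gm gi wi] inner_integrable[OF h2 w2]])
  finally show "(\<integral>x. f x * cnj (w x) \<partial>M) = (\<integral>x. g x * cnj (w x) \<partial>M) + (\<integral>x. h x * cnj (w x) \<partial>M)" .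
qed




lemma level_bound:
  fixes M :: "'a measure" and I :: "'i set" and u v :: "'i \<Rightarrow> 'a \<Rightarrow> complex"
    and f :: "'a \<Rightarrow> complex" and \<phi> :: "'i \<Rightarrow> real" and Mp :: ennreal
  assumes I: "countable I"
    and v2: "\<forall>\<xi>\<in>I. in_Lp M 2 (v \<xi>)" and vinf: "\<forall>\<xi>\<in>I. in_Linf M (v \<xi>)"
    and apos: "\<forall>\<xi>\<in>I. 0 < Linf_norm M (u \<xi>)"
    and K: "\<forall>\<xi>\<in>I. Linf_norm M (v \<xi>) \<le> K * Linf_norm M (u \<xi>)" "0 \<le> K"
    and bes: "\<forall>h. in_Lp M 2 h \<longrightarrow>
       (\<integral>\<^sup>+\<xi>. ennreal ((cmod (FL M v h \<xi>))\<^sup>2) \<partial>count_space I) \<le> ennreal (B * (\<integral>x. (cmod (h x))\<^sup>2 \<partial>M))"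
    and B: "0 \<le> B"
    and pos: "\<forall>\<xi>\<in>I. 0 < \<phi> \<xi>"
    and Mp: "\<And>t. 0 < t \<Longrightarrow> ennreal t * infsum (\<lambda>\<xi>. ennreal ((Linf_norm M (u \<xi>))\<^sup>2)) {\<xi>\<in>I. t \<le> \<phi> \<xi>} \<le> Mp"
    and f: "in_Lp M p f" and p: "1 \<le> p" "p \<le> 2" and s: "0 < s" and lam: "0 < lam"
  shows "(\<integral>\<^sup>+\<xi>. (if 2 * s < cmod (FL M v f \<xi>) / (Linf_norm M (u \<xi>) * \<phi> \<xi>)
              then ennreal ((Linf_norm M (u \<xi>))\<^sup>2 * (\<phi> \<xi>)\<^sup>2) else 0) \<partial>count_space I)
   \<le> ennreal (4 * K / s) * Mp * (\<integral>\<^sup>+x. (if lam < cmod (f x) then ennreal (cmod (f x)) else 0) \<partial>M)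
     + ennreal (B / s\<^sup>2) * (\<integral>\<^sup>+x. (if lam < cmod (f x) then 0 else ennreal ((cmod (f x))\<^sup>2)) \<partial>M)"
proof -
  define g where "g = (\<lambda>x. if lam < cmod (f x) then f x else 0)"
  define h where "h = (\<lambda>x. if lam < cmod (f x) then 0 else f x)"
  note D = decomp[OF f p lam g_def h_def]
  define E1 where "E1 = (\<integral>x. cmod (g x) \<partial>M)"
  define E2 where "E2 = (\<integral>x. (cmod (h x))\<^sup>2 \<partial>M)"
  have E1: "0 \<le> E1" unfolding E1_def by (auto intro: integral_nonneg_AE)
  have E2: "0 \<le> E2" unfolding E2_def by (auto intro: integral_nonneg_AE)
  define a where "a = (\<lambda>\<xi>. Linf_norm M (u \<xi>))"
  have pw: "(if 2 * s < cmod (FL M v f \<xi>) / (a \<xi> * \<phi> \<xi>) then ennreal ((a \<xi>)\<^sup>2 * (\<phi> \<xi>)\<^sup>2) else 0)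
      \<le> ennreal ((a \<xi>)\<^sup>2 * (\<phi> \<xi>)\<^sup>2) * indicator {\<xi>. \<phi> \<xi> < K * E1 / s} \<xi>
         + ennreal (1 / s\<^sup>2) * ennreal ((cmod (FL M v h \<xi>))\<^sup>2)" if xi: "\<xi> \<in> I" for \<xi>
  proof (cases "2 * s < cmod (FL M v f \<xi>) / (a \<xi> * \<phi> \<xi>)")
    case False thus ?thesis by simp
  next
    case True
    have a0: "0 < a \<xi>" using apos xi unfolding a_def by auto
    have ph0: "0 < \<phi> \<xi>" using pos xi by auto
    have c0: "0 < a \<xi> * \<phi> \<xi>" using a0 ph0 by simp
    have spl: "FL M v f \<xi> = FL M v g \<xi> + FL M v h \<xi>"
      unfolding FL_def using D(6) v2 vinf xi by auto
    have gb: "cmod (FL M v g \<xi>) \<le> K * a \<xi> * E1"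
    proof -
      have "cmod (FL M v g \<xi>) \<le> Linf_norm M (v \<xi>) * E1"
        unfolding FL_def E1_def using FL_L1(2)[OF D(1) D(2)] vinf xi by auto
      also have "\<dots> \<le> K * a \<xi> * E1" using K xi E1 unfolding a_def by (intro mult_right_mono) auto
      finally show ?thesis .
    qed
    have "2 * s * (a \<xi> * \<phi> \<xi>) < cmod (FL M v f \<xi>)" using True c0 by (simp add: pos_less_divide_eq)
    also have "\<dots> \<le> cmod (FL M v g \<xi>) + cmod (FL M v h \<xi>)" unfolding spl by (rule norm_triangle_ineq)
    finally have main: "2 * s * (a \<xi> * \<phi> \<xi>) < K * a \<xi> * E1 + cmod (FL M v h \<xi>)" using gb by simp
    show ?thesis
    proof (cases "s * (a \<xi> * \<phi> \<xi>) < K * a \<xi> * E1")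
      case True
      hence "s * \<phi> \<xi> < K * E1" using a0 by (simp add: mult.commute mult.left_commute)
      hence "\<phi> \<xi> < K * E1 / s" using s by (simp add: pos_less_divide_eq mult.commute)
      thus ?thesis using \<open>2 * s < cmod (FL M v f \<xi>) / (a \<xi> * \<phi> \<xi>)\<close> by simp
    next
      case False
      hence "s * (a \<xi> * \<phi> \<xi>) \<le> cmod (FL M v h \<xi>)" using main by simp
      hence "(s * (a \<xi> * \<phi> \<xi>))\<^sup>2 \<le> (cmod (FL M v h \<xi>))\<^sup>2" using s c0 by (intro power_mono) auto
      hence "(a \<xi>)\<^sup>2 * (\<phi> \<xi>)\<^sup>2 \<le> 1 / s\<^sup>2 * (cmod (FL M v h \<xi>))\<^sup>2"
        using s by (simp add: power_mult_distrib field_simps)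
      hence "ennreal ((a \<xi>)\<^sup>2 * (\<phi> \<xi>)\<^sup>2) \<le> ennreal (1 / s\<^sup>2) * ennreal ((cmod (FL M v h \<xi>))\<^sup>2)"
        by (simp add: ennreal_mult''[symmetric] ennreal_leI)
      thus ?thesis using \<open>2 * s < cmod (FL M v f \<xi>) / (a \<xi> * \<phi> \<xi>)\<close> by (simp add: add_increasing)
    qed
  qed
  have "(\<integral>\<^sup>+\<xi>. (if 2 * s < cmod (FL M v f \<xi>) / (a \<xi> * \<phi> \<xi>) then ennreal ((a \<xi>)\<^sup>2 * (\<phi> \<xi>)\<^sup>2) else 0) \<partial>count_space I)
    \<le> (\<integral>\<^sup>+\<xi>. ennreal ((a \<xi>)\<^sup>2 * (\<phi> \<xi>)\<^sup>2) * indicator {\<xi>. \<phi> \<xi> < K * E1 / s} \<xi>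
         + ennreal (1 / s\<^sup>2) * ennreal ((cmod (FL M v h \<xi>))\<^sup>2) \<partial>count_space I)"
    using pw by (intro nn_integral_mono) auto
  also have "\<dots> = (\<integral>\<^sup>+\<xi>. ennreal ((a \<xi>)\<^sup>2 * (\<phi> \<xi>)\<^sup>2) * indicator {\<xi>. \<phi> \<xi> < K * E1 / s} \<xi> \<partial>count_space I)
         + ennreal (1 / s\<^sup>2) * (\<integral>\<^sup>+\<xi>. ennreal ((cmod (FL M v h \<xi>))\<^sup>2) \<partial>count_space I)"
    by (simp add: nn_integral_add nn_integral_cmult)
  also have "\<dots> \<le> 4 * ennreal (K * E1 / s) * Mp + ennreal (1 / s\<^sup>2) * ennreal (B * E2)"
  proof (intro add_mono mult_left_mono)
    show "(\<integral>\<^sup>+\<xi>. ennreal ((a \<xi>)\<^sup>2 * (\<phi> \<xi>)\<^sup>2) * indicator {\<xi>. \<phi> \<xi> < K * E1 / s} \<xi> \<partial>count_space I)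
       \<le> 4 * ennreal (K * E1 / s) * Mp"
      unfolding a_def
      by (rule counting_lemma[OF I pos _ Mp]) (use K E1 s in auto)
    show "(\<integral>\<^sup>+\<xi>. ennreal ((cmod (FL M v h \<xi>))\<^sup>2) \<partial>count_space I) \<le> ennreal (B * E2)"
      using bes D(4) unfolding E2_def by blast
  qed auto
  also have "\<dots> = ennreal (4 * K / s) * Mp * ennreal E1 + ennreal (B / s\<^sup>2) * ennreal E2"
  proof -
    have y0: "0 \<le> K * E1 / s" using K E1 s by simp
    have "ennreal (4 * K / s) * ennreal E1 = ennreal (4 * K / s * E1)"
      using K E1 s by (simp add: ennreal_mult[symmetric])
    also have "4 * K / s * E1 = 4 * (K * E1 / s)" by simp
    also have "ennreal (4 * (K * E1 / s)) = ennreal 4 * ennreal (K * E1 / s)"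
      by (rule ennreal_mult) (use y0 in auto)
    finally have "4 * ennreal (K * E1 / s) = ennreal (4 * K / s) * ennreal E1" by simp
    moreover have "ennreal (1 / s\<^sup>2) * ennreal (B * E2) = ennreal (B / s\<^sup>2) * ennreal E2"
      using B E2 s by (simp add: ennreal_mult[symmetric])
    ultimately show ?thesis by (simp add: mult_ac)
  qed
  also have "ennreal E1 = (\<integral>\<^sup>+x. (if lam < cmod (f x) then ennreal (cmod (f x)) else 0) \<partial>M)"
    unfolding E1_def by (rule D(3))
  also have "ennreal E2 = (\<integral>\<^sup>+x. (if lam < cmod (f x) then 0 else ennreal ((cmod (f x))\<^sup>2)) \<partial>M)"
    unfolding E2_def by (rule D(5))
  finally show ?thesis unfolding a_def .
qed




lemma divpow: "0 < (F::real) \<Longrightarrow> 0 < Mr \<Longrightarrow> (F / Mr) powr q = F powr q * Mr powr (- q)"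
  by (subst powr_divide) (auto simp: powr_minus divide_inverse)

lemma sumk_E1:
  fixes f :: "'a \<Rightarrow> complex" and Mr p :: real
  assumes fm[measurable]: "f \<in> borel_measurable M" and Mr: "0 < Mr" and p: "1 < p"
  shows "(\<integral>\<^sup>+k. ennreal (2 powr (real_of_int k * (p - 1))) *
            (\<integral>\<^sup>+x. (if Mr * 2 powr real_of_int k < cmod (f x) then ennreal (cmod (f x)) else 0) \<partial>M) \<partial>count_space UNIV)
    \<le> ennreal (1 / (1 - 2 powr (- (p - 1))) * Mr powr (1 - p)) * (\<integral>\<^sup>+x. ennreal (cmod (f x) powr p) \<partial>M)"
proof -
  define C where "C = 1 / (1 - 2 powr (- (p - 1)))"
  have C0: "0 \<le> C" unfolding C_def using two_powr_neg_lt1[of "p - 1"] p by simp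
  have "(\<integral>\<^sup>+k. ennreal (2 powr (real_of_int k * (p - 1))) *
            (\<integral>\<^sup>+x. (if Mr * 2 powr real_of_int k < cmod (f x) then ennreal (cmod (f x)) else 0) \<partial>M) \<partial>count_space UNIV)
      = (\<integral>\<^sup>+k. (\<integral>\<^sup>+x. ennreal (2 powr (real_of_int k * (p - 1))) *
            (if Mr * 2 powr real_of_int k < cmod (f x) then ennreal (cmod (f x)) else 0) \<partial>M) \<partial>count_space UNIV)"
    by (intro nn_integral_cong nn_integral_cmult[symmetric]) measurable
  also have "\<dots> = (\<integral>\<^sup>+x. (\<integral>\<^sup>+k. ennreal (2 powr (real_of_int k * (p - 1))) *
            (if Mr * 2 powr real_of_int k < cmod (f x) then ennreal (cmod (f x)) else 0) \<partial>count_space UNIV) \<partial>M)"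
    by (rule nn_integral_count_space_nn_integral[symmetric]) auto
  also have "\<dots> \<le> (\<integral>\<^sup>+x. ennreal (C * Mr powr (1 - p)) * ennreal (cmod (f x) powr p) \<partial>M)"
  proof (intro nn_integral_mono)
    fix x
    show "(\<integral>\<^sup>+k. ennreal (2 powr (real_of_int k * (p - 1))) *
            (if Mr * 2 powr real_of_int k < cmod (f x) then ennreal (cmod (f x)) else 0) \<partial>count_space UNIV)
        \<le> ennreal (C * Mr powr (1 - p)) * ennreal (cmod (f x) powr p)"
    proof (cases "f x = 0")
      case True
      have "(\<integral>\<^sup>+k. ennreal (2 powr (real_of_int k * (p - 1))) *
            (if Mr * 2 powr real_of_int k < cmod (f x) then ennreal (cmod (f x)) else 0) \<partial>count_space UNIV)
          = (\<integral>\<^sup>+k. 0 \<partial>count_space (UNIV::int set))"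
        using True Mr by (intro nn_integral_cong) (auto simp: not_less intro: less_imp_le)
      thus ?thesis by simp
    next
      case False
      define F where "F = cmod (f x)"
      have F0: "0 < F" using False unfolding F_def by simp
      have "(\<integral>\<^sup>+k. ennreal (2 powr (real_of_int k * (p - 1))) *
            (if Mr * 2 powr real_of_int k < cmod (f x) then ennreal (cmod (f x)) else 0) \<partial>count_space UNIV)
         = (\<integral>\<^sup>+k. ennreal F * (ennreal (2 powr (real_of_int k * (p - 1))) *
               indicator {k. 2 powr real_of_int k < F / Mr} k) \<partial>count_space UNIV)"
        using Mr unfolding F_def by (intro nn_integral_cong) (auto simp: pos_less_divide_eq mult.commute split: split_indicator)
      also have "\<dots> = ennreal F * (\<integral>\<^sup>+k. ennreal (2 powr (real_of_int k * (p - 1))) *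
               indicator {k. 2 powr real_of_int k < F / Mr} k \<partial>count_space UNIV)"
        by (rule nn_integral_cmult) auto
      also have "\<dots> \<le> ennreal F * ennreal ((F / Mr) powr (p - 1) / (1 - 2 powr (- (p - 1))))"
        using G1[of "F / Mr" "p - 1"] F0 Mr p by (intro mult_left_mono) auto
      also have "\<dots> = ennreal (C * Mr powr (1 - p)) * ennreal (cmod (f x) powr p)"
      proof -
        have nn: "0 \<le> (F / Mr) powr (p - 1) / (1 - 2 powr (- (p - 1)))"
          using two_powr_neg_lt1[of "p - 1"] p by simp
        have eq: "F * ((F / Mr) powr (p - 1) / (1 - 2 powr (- (p - 1)))) = C * Mr powr (1 - p) * F powr p"
        proof -
          have "(F / Mr) powr (p - 1) = F powr (p - 1) * Mr powr (1 - p)"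
            using divpow[OF F0 Mr, of "p - 1"] by simp
          moreover have "F * F powr (p - 1) = F powr p" using F0 by (simp add: powr_mult_base)
          ultimately show ?thesis unfolding C_def by (simp add: field_simps)
        qed
        have "ennreal F * ennreal ((F / Mr) powr (p - 1) / (1 - 2 powr (- (p - 1))))
            = ennreal (F * ((F / Mr) powr (p - 1) / (1 - 2 powr (- (p - 1)))))"
          by (rule ennreal_mult[symmetric]) (use F0 nn in auto)
        also have "\<dots> = ennreal (C * Mr powr (1 - p)) * ennreal (F powr p)"
          unfolding eq using C0 by (subst ennreal_mult[symmetric]) auto
        finally show ?thesis unfolding F_def .
      qed
      finally show ?thesis .
    qed
  qed
  also have "\<dots> = ennreal (C * Mr powr (1 - p)) * (\<integral>\<^sup>+x. ennreal (cmod (f x) powr p) \<partial>M)"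
    by (rule nn_integral_cmult) measurable
  finally show ?thesis unfolding C_def .
qed

lemma sumk_E2:
  fixes f :: "'a \<Rightarrow> complex" and Mr p :: real
  assumes fm[measurable]: "f \<in> borel_measurable M" and Mr: "0 < Mr" and p: "p < 2"
  shows "(\<integral>\<^sup>+k. ennreal (2 powr (- (real_of_int k * (2 - p)))) *
            (\<integral>\<^sup>+x. (if Mr * 2 powr real_of_int k < cmod (f x) then 0 else ennreal ((cmod (f x))\<^sup>2)) \<partial>M) \<partial>count_space UNIV)
    \<le> ennreal (1 / (1 - 2 powr (- (2 - p))) * Mr powr (2 - p)) * (\<integral>\<^sup>+x. ennreal (cmod (f x) powr p) \<partial>M)"
proof -
  define C where "C = 1 / (1 - 2 powr (- (2 - p)))"
  have C0: "0 \<le> C" unfolding C_def using two_powr_neg_lt1[of "2 - p"] p by simp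
  have "(\<integral>\<^sup>+k. ennreal (2 powr (- (real_of_int k * (2 - p)))) *
            (\<integral>\<^sup>+x. (if Mr * 2 powr real_of_int k < cmod (f x) then 0 else ennreal ((cmod (f x))\<^sup>2)) \<partial>M) \<partial>count_space UNIV)
      = (\<integral>\<^sup>+k. (\<integral>\<^sup>+x. ennreal (2 powr (- (real_of_int k * (2 - p)))) *
            (if Mr * 2 powr real_of_int k < cmod (f x) then 0 else ennreal ((cmod (f x))\<^sup>2)) \<partial>M) \<partial>count_space UNIV)"
    by (intro nn_integral_cong nn_integral_cmult[symmetric]) measurable
  also have "\<dots> = (\<integral>\<^sup>+x. (\<integral>\<^sup>+k. ennreal (2 powr (- (real_of_int k * (2 - p)))) *
            (if Mr * 2 powr real_of_int k < cmod (f x) then 0 else ennreal ((cmod (f x))\<^sup>2)) \<partial>count_space UNIV) \<partial>M)"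
    by (rule nn_integral_count_space_nn_integral[symmetric]) auto
  also have "\<dots> \<le> (\<integral>\<^sup>+x. ennreal (C * Mr powr (2 - p)) * ennreal (cmod (f x) powr p) \<partial>M)"
  proof (intro nn_integral_mono)
    fix x
    show "(\<integral>\<^sup>+k. ennreal (2 powr (- (real_of_int k * (2 - p)))) *
            (if Mr * 2 powr real_of_int k < cmod (f x) then 0 else ennreal ((cmod (f x))\<^sup>2)) \<partial>count_space UNIV)
        \<le> ennreal (C * Mr powr (2 - p)) * ennreal (cmod (f x) powr p)"
    proof (cases "f x = 0")
      case True
      have "(\<integral>\<^sup>+k. ennreal (2 powr (- (real_of_int k * (2 - p)))) *
            (if Mr * 2 powr real_of_int k < cmod (f x) then 0 else ennreal ((cmod (f x))\<^sup>2)) \<partial>count_space UNIV)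
          = (\<integral>\<^sup>+k. 0 \<partial>count_space (UNIV::int set))"
        using True by (intro nn_integral_cong) auto
      thus ?thesis by simp
    next
      case False
      define F where "F = cmod (f x)"
      have F0: "0 < F" using False unfolding F_def by simp
      have "(\<integral>\<^sup>+k. ennreal (2 powr (- (real_of_int k * (2 - p)))) *
            (if Mr * 2 powr real_of_int k < cmod (f x) then 0 else ennreal ((cmod (f x))\<^sup>2)) \<partial>count_space UNIV)
         = (\<integral>\<^sup>+k. ennreal (F\<^sup>2) * (ennreal (2 powr (- (real_of_int k * (2 - p)))) *
               indicator {k. F / Mr \<le> 2 powr real_of_int k} k) \<partial>count_space UNIV)"
        using Mr unfolding F_def by (intro nn_integral_cong) (auto simp: divide_le_eq mult.commute not_less split: split_indicator)
      also have "\<dots> = ennreal (F\<^sup>2) * (\<integral>\<^sup>+k. ennreal (2 powr (- (real_of_int k * (2 - p)))) *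
               indicator {k. F / Mr \<le> 2 powr real_of_int k} k \<partial>count_space UNIV)"
        by (rule nn_integral_cmult) auto
      also have "\<dots> \<le> ennreal (F\<^sup>2) * ennreal ((F / Mr) powr (- (2 - p)) / (1 - 2 powr (- (2 - p))))"
        using G2[of "F / Mr" "2 - p"] F0 Mr p by (intro mult_left_mono) auto
      also have "\<dots> = ennreal (C * Mr powr (2 - p)) * ennreal (cmod (f x) powr p)"
      proof -
        have nn: "0 \<le> (F / Mr) powr (- (2 - p)) / (1 - 2 powr (- (2 - p)))"
          using two_powr_neg_lt1[of "2 - p"] p by simp
        have eq: "F\<^sup>2 * ((F / Mr) powr (- (2 - p)) / (1 - 2 powr (- (2 - p)))) = C * Mr powr (2 - p) * F powr p"
        proof -
          have "(F / Mr) powr (- (2 - p)) = F powr (p - 2) * Mr powr (2 - p)"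
            using divpow[OF F0 Mr, of "- (2 - p)"] by simp
          moreover have "F\<^sup>2 * F powr (p - 2) = F powr p" using F0
            by (simp add: powr_add[symmetric] flip: powr_numeral)
          ultimately show ?thesis unfolding C_def by (simp add: field_simps)
        qed
        have "ennreal (F\<^sup>2) * ennreal ((F / Mr) powr (- (2 - p)) / (1 - 2 powr (- (2 - p))))
            = ennreal (F\<^sup>2 * ((F / Mr) powr (- (2 - p)) / (1 - 2 powr (- (2 - p)))))"
          by (rule ennreal_mult[symmetric]) (use F0 nn in auto)
        also have "\<dots> = ennreal (C * Mr powr (2 - p)) * ennreal (F powr p)"
          unfolding eq using C0 by (subst ennreal_mult[symmetric]) auto
        finally show ?thesis unfolding F_def .
      qed
      finally show ?thesis .
    qed
  qed
  also have "\<dots> = ennreal (C * Mr powr (2 - p)) * (\<integral>\<^sup>+x. ennreal (cmod (f x) powr p) \<partial>M)"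
    by (rule nn_integral_cmult) measurable
  finally show ?thesis unfolding C_def .
qed




lemma pw1: "(2::real) powr (k * p) / 2 powr k = 2 powr (k * (p - 1))"
  by (simp add: powr_diff[symmetric] algebra_simps)

lemma pw2: "(2::real) powr (k * p) / (2 powr k)\<^sup>2 = 2 powr (- (k * (2 - p)))"
proof -
  have "(2 powr k)\<^sup>2 = (2::real) powr (k + k)" by (simp only: power2_eq_square powr_add)
  thus ?thesis by (simp add: powr_diff[symmetric] algebra_simps)
qed

lemma paley_core:
  fixes M :: "'a measure" and I :: "'i set" and u v :: "'i \<Rightarrow> 'a \<Rightarrow> complex"
    and f :: "'a \<Rightarrow> complex" and \<phi> :: "'i \<Rightarrow> real" and Mr :: real
  assumes I: "countable I"
    and v2: "\<forall>\<xi>\<in>I. in_Lp M 2 (v \<xi>)" and vinf: "\<forall>\<xi>\<in>I. in_Linf M (v \<xi>)"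
    and apos: "\<forall>\<xi>\<in>I. 0 < Linf_norm M (u \<xi>)"
    and K: "\<forall>\<xi>\<in>I. Linf_norm M (v \<xi>) \<le> K * Linf_norm M (u \<xi>)" "0 \<le> K"
    and bes: "\<forall>h. in_Lp M 2 h \<longrightarrow>
       (\<integral>\<^sup>+\<xi>. ennreal ((cmod (FL M v h \<xi>))\<^sup>2) \<partial>count_space I) \<le> ennreal (B * (\<integral>x. (cmod (h x))\<^sup>2 \<partial>M))"
    and B: "0 \<le> B"
    and pos: "\<forall>\<xi>\<in>I. 0 < \<phi> \<xi>"
    and Mp: "\<And>t. 0 < t \<Longrightarrow> ennreal t * infsum (\<lambda>\<xi>. ennreal ((Linf_norm M (u \<xi>))\<^sup>2)) {\<xi>\<in>I. t \<le> \<phi> \<xi>} \<le> ennreal Mr"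
    and Mr: "0 < Mr"
    and f: "in_Lp M p f" and p: "1 < p" "p < 2"
  shows "(\<integral>\<^sup>+\<xi>. ennreal (cmod (FL M v f \<xi>) powr p * Linf_norm M (u \<xi>) powr (2 - p) * \<phi> \<xi> powr (2 - p)) \<partial>count_space I)
     \<le> ennreal (4 powr p * (4 * K * (1 / (1 - 2 powr (- (p - 1)))) + B * (1 / (1 - 2 powr (- (2 - p)))))
          * Mr powr (2 - p) * (\<integral>x. cmod (f x) powr p \<partial>M))"
proof -
  have fm[measurable]: "f \<in> borel_measurable M" and fi: "integrable M (\<lambda>x. cmod (f x) powr p)"
    using f unfolding in_Lp_def by auto
  define C1 where "C1 = 1 / (1 - 2 powr (- (p - 1)))"
  define C2 where "C2 = 1 / (1 - 2 powr (- (2 - p)))"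
  have C1: "0 \<le> C1" unfolding C1_def using two_powr_neg_lt1[of "p - 1"] p by simp
  have C2: "0 \<le> C2" unfolding C2_def using two_powr_neg_lt1[of "2 - p"] p by simp
  define a where "a = (\<lambda>\<xi>. Linf_norm M (u \<xi>))"
  define T where "T = (\<lambda>\<xi>. cmod (FL M v f \<xi>) / (a \<xi> * \<phi> \<xi>))"
  define J where "J = (\<integral>x. cmod (f x) powr p \<partial>M)"
  have J: "0 \<le> J" unfolding J_def by (auto intro: integral_nonneg_AE)
  have Jn: "(\<integral>\<^sup>+x. ennreal (cmod (f x) powr p) \<partial>M) = ennreal J"
    unfolding J_def by (rule nn_integral_eq_integral[OF fi]) auto
  define E1 where "E1 = (\<lambda>k::int. (\<integral>\<^sup>+x. (if Mr * 2 powr real_of_int k < cmod (f x) then ennreal (cmod (f x)) else 0) \<partial>M))"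
  define E2 where "E2 = (\<lambda>k::int. (\<integral>\<^sup>+x. (if Mr * 2 powr real_of_int k < cmod (f x) then 0 else ennreal ((cmod (f x))\<^sup>2)) \<partial>M))"
  define L where "L = (\<lambda>(k::int) \<xi>. (if 2 * 2 powr real_of_int k < T \<xi> then ennreal ((a \<xi>)\<^sup>2 * (\<phi> \<xi>)\<^sup>2) else 0))"
  have st1: "ennreal (cmod (FL M v f \<xi>) powr p * a \<xi> powr (2 - p) * \<phi> \<xi> powr (2 - p))
      \<le> ennreal (4 powr p) * (\<integral>\<^sup>+k. ennreal (2 powr (real_of_int k * p)) * L k \<xi> \<partial>count_space UNIV)"
    if xi: "\<xi> \<in> I" for \<xi>
  proof -
    have a0: "0 < a \<xi>" using apos xi unfolding a_def by auto
    have ph0: "0 < \<phi> \<xi>" using pos xi by auto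
    define c where "c = a \<xi> * \<phi> \<xi>"
    have c0: "0 < c" unfolding c_def using a0 ph0 by simp
    have id: "cmod (FL M v f \<xi>) powr p * a \<xi> powr (2 - p) * \<phi> \<xi> powr (2 - p) = c\<^sup>2 * T \<xi> powr p"
    proof -
      have "a \<xi> powr (2 - p) * \<phi> \<xi> powr (2 - p) = c powr (2 - p)"
        unfolding c_def using a0 ph0 by (simp add: powr_mult)
      moreover have "T \<xi> powr p = cmod (FL M v f \<xi>) powr p / c powr p"
        unfolding T_def c_def[symmetric] using c0 by (simp add: powr_divide)
      moreover have "c\<^sup>2 / c powr p = c powr (2 - p)" using c0 by (simp add: powr_diff)
      ultimately have h: "a \<xi> powr (2 - p) * \<phi> \<xi> powr (2 - p) = c\<^sup>2 / c powr p"
        "T \<xi> powr p = cmod (FL M v f \<xi>) powr p / c powr p" by auto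
      have "cmod (FL M v f \<xi>) powr p * a \<xi> powr (2 - p) * \<phi> \<xi> powr (2 - p)
          = cmod (FL M v f \<xi>) powr p * (a \<xi> powr (2 - p) * \<phi> \<xi> powr (2 - p))" by (simp add: mult.assoc)
      also have "\<dots> = cmod (FL M v f \<xi>) powr p * (c\<^sup>2 / c powr p)" by (simp only: h(1))
      also have "\<dots> = c\<^sup>2 * (cmod (FL M v f \<xi>) powr p / c powr p)" by simp
      also have "\<dots> = c\<^sup>2 * T \<xi> powr p" by (simp only: h(2))
      finally show ?thesis .
    qed
    show ?thesis
    proof (cases "T \<xi> = 0")
      case True
      have z: "cmod (FL M v f \<xi>) powr p * a \<xi> powr (2 - p) * \<phi> \<xi> powr (2 - p) = 0"
        unfolding id True by simp
      show ?thesis unfolding z by simp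
    next
      case False
      hence T0: "0 < T \<xi>" unfolding T_def using c0 c_def by simp
      have "ennreal (cmod (FL M v f \<xi>) powr p * a \<xi> powr (2 - p) * \<phi> \<xi> powr (2 - p))
          = ennreal (c\<^sup>2) * ennreal (T \<xi> powr p)" unfolding id by (simp add: ennreal_mult)
      also have "\<dots> \<le> ennreal (c\<^sup>2) * (ennreal (4 powr p) *
          (\<integral>\<^sup>+k. ennreal (2 powr (real_of_int k * p)) * indicator {k. 2 * 2 powr real_of_int k < T \<xi>} k \<partial>count_space UNIV))"
        using G3[OF T0, of p] p by (intro mult_left_mono) auto
      also have "\<dots> = ennreal (4 powr p) * (\<integral>\<^sup>+k. ennreal (c\<^sup>2) *
          (ennreal (2 powr (real_of_int k * p)) * indicator {k. 2 * 2 powr real_of_int k < T \<xi>} k) \<partial>count_space UNIV)"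
        by (subst nn_integral_cmult) (auto simp: mult_ac)
      also have "\<dots> = ennreal (4 powr p) * (\<integral>\<^sup>+k. ennreal (2 powr (real_of_int k * p)) * L k \<xi> \<partial>count_space UNIV)"
        by (rule arg_cong[where f="\<lambda>X. ennreal (4 powr p) * X"], rule nn_integral_cong)
          (auto simp: L_def c_def power_mult_distrib mult_ac split: split_indicator)
      finally show ?thesis .
    qed
  qed
  have st2: "(\<integral>\<^sup>+\<xi>. L k \<xi> \<partial>count_space I)
      \<le> ennreal (4 * K / 2 powr real_of_int k) * ennreal Mr * E1 k + ennreal (B / (2 powr real_of_int k)\<^sup>2) * E2 k" for k
    unfolding L_def T_def a_def E1_def E2_def
    by (rule level_bound[OF I v2 vinf apos K bes B pos Mp f]) (use p Mr in auto)
  have st3: "ennreal (2 powr (real_of_int k * p)) *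
      (ennreal (4 * K / 2 powr real_of_int k) * ennreal Mr * E1 k + ennreal (B / (2 powr real_of_int k)\<^sup>2) * E2 k)
    = ennreal (4 * K) * ennreal Mr * (ennreal (2 powr (real_of_int k * (p - 1))) * E1 k)
      + ennreal B * (ennreal (2 powr (- (real_of_int k * (2 - p)))) * E2 k)" for k
  proof -
    have r1: "ennreal (2 powr (real_of_int k * p)) * ennreal (4 * K / 2 powr real_of_int k)
        = ennreal (4 * K) * ennreal (2 powr (real_of_int k * (p - 1)))"
    proof -
      have "ennreal (2 powr (real_of_int k * p)) * ennreal (4 * K / 2 powr real_of_int k)
          = ennreal (2 powr (real_of_int k * p) * (4 * K / 2 powr real_of_int k))"
        by (rule ennreal_mult[symmetric]) (use K in auto)
      also have "2 powr (real_of_int k * p) * (4 * K / 2 powr real_of_int k) = 4 * K * (2 powr (real_of_int k * p) / 2 powr real_of_int k)"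
        by simp
      also have "\<dots> = 4 * K * 2 powr (real_of_int k * (p - 1))" by (simp only: pw1)
      also have "ennreal (4 * K * 2 powr (real_of_int k * (p - 1))) = ennreal (4 * K) * ennreal (2 powr (real_of_int k * (p - 1)))"
        by (rule ennreal_mult) (use K in auto)
      finally show ?thesis .
    qed
    have r2: "ennreal (2 powr (real_of_int k * p)) * ennreal (B / (2 powr real_of_int k)\<^sup>2)
        = ennreal B * ennreal (2 powr (- (real_of_int k * (2 - p))))"
    proof -
      have "ennreal (2 powr (real_of_int k * p)) * ennreal (B / (2 powr real_of_int k)\<^sup>2)
          = ennreal (2 powr (real_of_int k * p) * (B / (2 powr real_of_int k)\<^sup>2))"
        by (rule ennreal_mult[symmetric]) (use B in auto)
      also have "2 powr (real_of_int k * p) * (B / (2 powr real_of_int k)\<^sup>2) = B * (2 powr (real_of_int k * p) / (2 powr real_of_int k)\<^sup>2)"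
        by simp
      also have "\<dots> = B * 2 powr (- (real_of_int k * (2 - p)))" by (simp only: pw2)
      also have "ennreal (B * 2 powr (- (real_of_int k * (2 - p)))) = ennreal B * ennreal (2 powr (- (real_of_int k * (2 - p))))"
        by (rule ennreal_mult) (use B in auto)
      finally show ?thesis .
    qed
    have "ennreal (2 powr (real_of_int k * p)) *
      (ennreal (4 * K / 2 powr real_of_int k) * ennreal Mr * E1 k + ennreal (B / (2 powr real_of_int k)\<^sup>2) * E2 k)
      = (ennreal (2 powr (real_of_int k * p)) * ennreal (4 * K / 2 powr real_of_int k)) * ennreal Mr * E1 k
        + (ennreal (2 powr (real_of_int k * p)) * ennreal (B / (2 powr real_of_int k)\<^sup>2)) * E2 k"
      by (simp add: distrib_left mult.assoc)
    also have "\<dots> = ennreal (4 * K) * ennreal Mr * (ennreal (2 powr (real_of_int k * (p - 1))) * E1 k)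
      + ennreal B * (ennreal (2 powr (- (real_of_int k * (2 - p)))) * E2 k)"
      unfolding r1 r2 by (simp add: mult_ac)
    finally show ?thesis .
  qed
  have "(\<integral>\<^sup>+\<xi>. ennreal (cmod (FL M v f \<xi>) powr p * Linf_norm M (u \<xi>) powr (2 - p) * \<phi> \<xi> powr (2 - p)) \<partial>count_space I)
      \<le> (\<integral>\<^sup>+\<xi>. ennreal (4 powr p) * (\<integral>\<^sup>+k. ennreal (2 powr (real_of_int k * p)) * L k \<xi> \<partial>count_space UNIV) \<partial>count_space I)"
    using st1 unfolding a_def by (intro nn_integral_mono) auto
  also have "\<dots> = ennreal (4 powr p) * (\<integral>\<^sup>+\<xi>. (\<integral>\<^sup>+k. ennreal (2 powr (real_of_int k * p)) * L k \<xi> \<partial>count_space UNIV) \<partial>count_space I)"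
    by (rule nn_integral_cmult) auto
  also have "(\<integral>\<^sup>+\<xi>. (\<integral>\<^sup>+k. ennreal (2 powr (real_of_int k * p)) * L k \<xi> \<partial>count_space UNIV) \<partial>count_space I)
      = (\<integral>\<^sup>+k. (\<integral>\<^sup>+\<xi>. ennreal (2 powr (real_of_int k * p)) * L k \<xi> \<partial>count_space I) \<partial>count_space UNIV)"
    by (rule nn_integral_count_space_nn_integral) auto
  also have "\<dots> = (\<integral>\<^sup>+k. ennreal (2 powr (real_of_int k * p)) * (\<integral>\<^sup>+\<xi>. L k \<xi> \<partial>count_space I) \<partial>count_space UNIV)"
    by (intro nn_integral_cong nn_integral_cmult) auto
  also have "\<dots> \<le> (\<integral>\<^sup>+k. ennreal (4 * K) * ennreal Mr * (ennreal (2 powr (real_of_int k * (p - 1))) * E1 k)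
      + ennreal B * (ennreal (2 powr (- (real_of_int k * (2 - p)))) * E2 k) \<partial>count_space UNIV)"
    unfolding st3[symmetric] by (intro nn_integral_mono mult_left_mono st2) auto
  also have "\<dots> = ennreal (4 * K) * ennreal Mr * (\<integral>\<^sup>+k. ennreal (2 powr (real_of_int k * (p - 1))) * E1 k \<partial>count_space UNIV)
      + ennreal B * (\<integral>\<^sup>+k. ennreal (2 powr (- (real_of_int k * (2 - p)))) * E2 k \<partial>count_space UNIV)"
    by (simp add: nn_integral_add nn_integral_cmult)
  also have "\<dots> \<le> ennreal (4 * K) * ennreal Mr * (ennreal (C1 * Mr powr (1 - p)) * ennreal J)
      + ennreal B * (ennreal (C2 * Mr powr (2 - p)) * ennreal J)"
    unfolding E1_def E2_def C1_def C2_def Jn[symmetric]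
    by (intro add_mono mult_left_mono sumk_E1[OF fm Mr p(1)] sumk_E2[OF fm Mr p(2)]) auto
  also have "\<dots> = ennreal ((4 * K * C1 + B * C2) * Mr powr (2 - p) * J)"
  proof -
    have "Mr * Mr powr (1 - p) = Mr powr (2 - p)" using Mr by (simp add: powr_mult_base)
    hence e: "4 * K * Mr * (C1 * Mr powr (1 - p) * J) + B * (C2 * Mr powr (2 - p) * J)
        = (4 * K * C1 + B * C2) * Mr powr (2 - p) * J"
      by (simp add: algebra_simps)
    have "ennreal (4 * K) * ennreal Mr * (ennreal (C1 * Mr powr (1 - p)) * ennreal J)
      + ennreal B * (ennreal (C2 * Mr powr (2 - p)) * ennreal J)
      = ennreal (4 * K * Mr * (C1 * Mr powr (1 - p) * J) + B * (C2 * Mr powr (2 - p) * J))"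
      using K Mr C1 C2 J B by (simp add: ennreal_mult ennreal_plus[symmetric] ennreal_mult'')
    thus ?thesis unfolding e .
  qed
  finally have "(\<integral>\<^sup>+\<xi>. ennreal (cmod (FL M v f \<xi>) powr p * Linf_norm M (u \<xi>) powr (2 - p) * \<phi> \<xi> powr (2 - p)) \<partial>count_space I)
      \<le> ennreal (4 powr p) * ennreal ((4 * K * C1 + B * C2) * Mr powr (2 - p) * J)"
    by (metis mult_left_mono zero_le)
  also have "\<dots> = ennreal (4 powr p * (4 * K * C1 + B * C2) * Mr powr (2 - p) * J)"
    by (subst ennreal_mult[symmetric]) (auto simp: mult.assoc intro!: mult_nonneg_nonneg add_nonneg_nonneg C1 C2 K B J)
  finally show ?thesis unfolding C1_def C2_def J_def .
qed




theorem mainTheorem5: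
  fixes M :: "'a measure" and I :: "'i set"
    and u v :: "'i \<Rightarrow> 'a \<Rightarrow> complex" and p :: real
  assumes I_countable: "countable I"
    and u_norm: "\<forall>\<xi>\<in>I. in_Lp M 2 (u \<xi>) \<and> Lp_norm M 2 (u \<xi>) = 1"
    and v_norm: "\<forall>\<xi>\<in>I. in_Lp M 2 (v \<xi>) \<and> Lp_norm M 2 (v \<xi>) = 1"
    and biorth: "\<forall>\<xi>\<in>I. \<forall>\<eta>\<in>I. L2_inner M (u \<xi>) (v \<eta>) = (if \<xi> = \<eta> then 1 else 0)"
    and riesz: "riesz_basis M I u"
    and u_Linf: "\<forall>\<xi>\<in>I. in_Linf M (u \<xi>)"
    and v_Linf: "\<forall>\<xi>\<in>I. in_Linf M (v \<xi>)"
    and p_range: "1 < p" "p \<le> 2"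
    and ratio_bdd: "bdd_above ((\<lambda>\<xi>. Linf_norm M (v \<xi>) / Linf_norm M (u \<xi>)) ` I)"
  shows "\<exists>C. \<forall>\<phi> :: 'i \<Rightarrow> real. \<forall>f.
           (\<forall>\<xi>\<in>I. 0 < \<phi> \<xi>) \<longrightarrow> M_phi M I u \<phi> < \<infinity> \<longrightarrow> in_Lp M p f \<longrightarrow>
           ((\<lambda>\<xi>. cmod (FL M v f \<xi>) powr p * Linf_norm M (u \<xi>) powr (2 - p) * \<phi> \<xi> powr (2 - p))
               summable_on I) \<and>
           (\<Sum>\<^sub>\<infinity>\<xi>\<in>I. cmod (FL M v f \<xi>) powr p * Linf_norm M (u \<xi>) powr (2 - p) * \<phi> \<xi> powr (2 - p))
               powr (1 / p)
             \<le> C * enn2real (M_phi M I u \<phi>) powr ((2 - p) / p) * Lp_norm M p f"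
proof -
  have u2: "\<forall>\<xi>\<in>I. in_Lp M 2 (u \<xi>)" using u_norm by blast
  have v2: "\<forall>\<xi>\<in>I. in_Lp M 2 (v \<xi>)" using v_norm by blast
  have apos: "\<forall>\<xi>\<in>I. 0 < Linf_norm M (u \<xi>)"
    using u_norm u_Linf Linf_pos by blast
  obtain B where B: "B > 0" and bes: "\<forall>h. in_Lp M 2 h \<longrightarrow>
     (\<integral>\<^sup>+\<xi>. ennreal ((cmod (FL M v h \<xi>))\<^sup>2) \<partial>count_space I) \<le> ennreal (B * (\<integral>x. (cmod (h x))\<^sup>2 \<partial>M))"
    using bessel[OF I_countable v_norm biorth riesz] by blast
  obtain K0 where K0: "\<And>\<xi>. \<xi> \<in> I \<Longrightarrow> Linf_norm M (v \<xi>) / Linf_norm M (u \<xi>) \<le> K0"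
    using ratio_bdd unfolding bdd_above_def by auto
  define K where "K = max K0 0"
  have K: "\<forall>\<xi>\<in>I. Linf_norm M (v \<xi>) \<le> K * Linf_norm M (u \<xi>)" "0 \<le> K"
  proof -
    show "0 \<le> K" unfolding K_def by simp
    show "\<forall>\<xi>\<in>I. Linf_norm M (v \<xi>) \<le> K * Linf_norm M (u \<xi>)"
    proof
      fix \<xi> assume xi: "\<xi> \<in> I"
      have a0: "0 < Linf_norm M (u \<xi>)" using apos xi by auto
      have "Linf_norm M (v \<xi>) / Linf_norm M (u \<xi>) \<le> K" using K0[OF xi] unfolding K_def by simp
      thus "Linf_norm M (v \<xi>) \<le> K * Linf_norm M (u \<xi>)" using a0 by (simp add: divide_le_eq)
    qed
  qed
  define C0 where "C0 = (if p = 2 then B else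
      4 powr p * (4 * K * (1 / (1 - 2 powr (- (p - 1)))) + B * (1 / (1 - 2 powr (- (2 - p))))))"
  have C0: "0 \<le> C0"
    unfolding C0_def using B K two_powr_neg_lt1[of "p - 1"] two_powr_neg_lt1[of "2 - p"] p_range
    by (auto intro!: mult_nonneg_nonneg add_nonneg_nonneg)
  show ?thesis
  proof (intro exI[of _ "C0 powr (1 / p)"] allI impI)
    fix \<phi> :: "'i \<Rightarrow> real" and f
    assume pos: "\<forall>\<xi>\<in>I. 0 < \<phi> \<xi>" and Mfin: "M_phi M I u \<phi> < \<infinity>" and f: "in_Lp M p f"
    define tm where "tm = (\<lambda>\<xi>. cmod (FL M v f \<xi>) powr p * Linf_norm M (u \<xi>) powr (2 - p) * \<phi> \<xi> powr (2 - p))"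
    have tm0: "\<And>\<xi>. 0 \<le> tm \<xi>" unfolding tm_def by simp
    define J where "J = (\<integral>x. cmod (f x) powr p \<partial>M)"
    have J0: "0 \<le> J" unfolding J_def by (auto intro: integral_nonneg_AE)
    have LpJ: "Lp_norm M p f = J powr (1 / p)" unfolding Lp_norm_def J_def ..
    define Mr where "Mr = enn2real (M_phi M I u \<phi>)"
    have Mr0: "0 \<le> Mr" unfolding Mr_def by simp
    have rhs0: "0 \<le> C0 powr (1 / p) * Mr powr ((2 - p) / p) * Lp_norm M p f"
      unfolding LpJ by simp
    show "tm summable_on I \<and> infsum tm I powr (1 / p) \<le> C0 powr (1 / p) * Mr powr ((2 - p) / p) * Lp_norm M p f"
      unfolding tm_def[symmetric] Mr_def[symmetric]
    proof (cases "I = {}")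
      case True
      thus ?thesis using rhs0 p_range by simp
    next
      case False
      then obtain \<xi>0 where xi0: "\<xi>0 \<in> I" by blast
      have Mp: "\<And>t. 0 < t \<Longrightarrow> ennreal t * infsum (\<lambda>\<xi>. ennreal ((Linf_norm M (u \<xi>))\<^sup>2)) {\<xi>\<in>I. t \<le> \<phi> \<xi>} \<le> M_phi M I u \<phi>"
        unfolding M_phi_def by (rule SUP_upper) auto
      have Mpos: "0 < M_phi M I u \<phi>"
      proof -
        have t0: "0 < \<phi> \<xi>0" using pos xi0 by auto
        have "ennreal ((Linf_norm M (u \<xi>0))\<^sup>2) \<le> infsum (\<lambda>\<xi>. ennreal ((Linf_norm M (u \<xi>))\<^sup>2)) {\<xi>\<in>I. \<phi> \<xi>0 \<le> \<phi> \<xi>}"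
          using infsum_ennreal_ge_finite[of "{\<xi>0}" "{\<xi>\<in>I. \<phi> \<xi>0 \<le> \<phi> \<xi>}" "\<lambda>\<xi>. ennreal ((Linf_norm M (u \<xi>))\<^sup>2)"] xi0 by simp
        hence "ennreal (\<phi> \<xi>0) * ennreal ((Linf_norm M (u \<xi>0))\<^sup>2) \<le> M_phi M I u \<phi>"
          using Mp[OF t0] by (meson mult_left_mono order_trans zero_le)
        moreover have "0 < ennreal (\<phi> \<xi>0) * ennreal ((Linf_norm M (u \<xi>0))\<^sup>2)"
        proof -
          have "0 < Linf_norm M (u \<xi>0)" using apos xi0 by auto
          hence "0 < \<phi> \<xi>0 * (Linf_norm M (u \<xi>0))\<^sup>2" using t0 by simp
          thus ?thesis using t0 by (simp add: ennreal_mult''[symmetric])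
        qed
        ultimately show ?thesis by simp
      qed
      have MpMr: "M_phi M I u \<phi> = ennreal Mr" unfolding Mr_def using Mfin by simp
      have Mr: "0 < Mr" using Mpos MpMr by simp
      have Mp': "\<And>t. 0 < t \<Longrightarrow> ennreal t * infsum (\<lambda>\<xi>. ennreal ((Linf_norm M (u \<xi>))\<^sup>2)) {\<xi>\<in>I. t \<le> \<phi> \<xi>} \<le> ennreal Mr"
        using Mp MpMr by simp
      have S: "(\<integral>\<^sup>+\<xi>. ennreal (tm \<xi>) \<partial>count_space I) \<le> ennreal (C0 * Mr powr (2 - p) * J)"
      proof (cases "p = 2")
        case False
        hence p2: "p < 2" using p_range by simp
        show ?thesis unfolding tm_def C0_def J_def using False
          by (simp only: if_False) (rule paley_core[OF I_countable v2 v_Linf apos K bes _ pos Mp' Mr f p_range(1) p2], use B in simp)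
      next
        case True
        have f2: "in_Lp M 2 f" using f True by simp
        have "(\<integral>\<^sup>+\<xi>. ennreal (tm \<xi>) \<partial>count_space I) = (\<integral>\<^sup>+\<xi>. ennreal ((cmod (FL M v f \<xi>))\<^sup>2) \<partial>count_space I)"
          unfolding tm_def True using apos pos by (intro nn_integral_cong) auto
        also have "\<dots> \<le> ennreal (B * (\<integral>x. (cmod (f x))\<^sup>2 \<partial>M))" using bes f2 by blast
        also have "B * (\<integral>x. (cmod (f x))\<^sup>2 \<partial>M) = C0 * Mr powr (2 - p) * J"
          unfolding C0_def J_def True using Mr by simp
        finally show ?thesis .
      qed
      have fin: "(\<integral>\<^sup>+\<xi>. ennreal (norm (tm \<xi>)) \<partial>count_space I) < \<infinity>"
        using S tm0 by (simp add: order_le_less_trans)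
      have int: "integrable (count_space I) tm" by (rule integrableI_bounded) (use fin in auto)
      have as: "Infinite_Set_Sum.abs_summable_on tm I"
        using int by (simp add: Infinite_Set_Sum.abs_summable_on_def)
      have summ: "tm summable_on I"
        using as abs_summable_equivalent[of tm I] Infinite_Sum.abs_summable_summable by blast
      have "ennreal (infsetsum tm I) = (\<integral>\<^sup>+\<xi>. ennreal (tm \<xi>) \<partial>count_space I)"
        by (rule nn_integral_conv_infsetsum[OF as, symmetric]) (use tm0 in auto)
      hence "ennreal (infsum tm I) \<le> ennreal (C0 * Mr powr (2 - p) * J)"
        using S infsetsum_infsum[OF as] by simp
      hence le: "infsum tm I \<le> C0 * Mr powr (2 - p) * J"
        using C0 Mr0 J0 by (simp add: ennreal_le_iff)
      have i0: "0 \<le> infsum tm I" using tm0 by (simp add: infsum_nonneg)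
      have "infsum tm I powr (1 / p) \<le> (C0 * Mr powr (2 - p) * J) powr (1 / p)"
        using le i0 p_range by (intro powr_mono2) auto
      also have "\<dots> = C0 powr (1 / p) * Mr powr ((2 - p) / p) * J powr (1 / p)"
        using C0 Mr0 J0 by (simp add: powr_mult powr_powr)
      finally show ?thesis using summ unfolding LpJ by simp
    qed
  qed
qed


end
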